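(* Fix $g\ge1$ and $0\le g'<g$, $g''=g-g'$. Equip $\mathbb{P}_{g'}\backslash\mathfrak{S}_g$ with the Weil–Petersson metric $g_{WP}$ and $A_{g'}\times\mathcal{T}^{>0}_{g''}$ with the product metric $g'_{WP}+g''_{trWP}$. Then the projection $\pi_{g'}:\mathbb{P}_{g'}\backslash\mathfrak{S}_g\to A_{g'}\times\mathcal{T}^{>0}_{g''}$ is a Riemannian submersion; in particular it is $1$-Lipschitz.
   Context: $\mathfrak{S}_g=\{\tau\in\mathrm{Sym}(g,\mathbb{C}):\operatorname{Im}\tau>0\}$, $\tau=X+iY$, with $\mathrm{Sp}(2g,\mathbb{R})$ acting by $\begin{pmatrix}A&B\\C&D\end{pmatrix}\cdot\tau=(A\tau+B)(C\tau+D)^{-1}$; $\Gamma=\mathrm{Sp}(2g,\mathbb{Z})/\{\pm1\}$. The Weil–Petersson metric $g_{WP}$ is the invariant metric with $\|V\|_\tau^2=\frac12\big(\operatorname{tr}(Y^{-1}V_XY^{-1}V_X)+\operatorname{tr}(Y^{-1}V_YY^{-1}V_Y)\big)$ for $V=V_X+iV_Y\in\mathrm{Sym}(g,\mathbb{C})\cong T_\tau\mathfrak{S}_g$ (Kähler form $\frac{i}{4}\operatorname{tr}(Y^{-1}d\tau Y^{-1}d\bar\tau)$); $g'_{WP}$ is the same metric on $\mathfrak{S}_{g'}$ and on $A_{g'}=\mathrm{Sp}(2g',\mathbb{Z})\backslash\mathfrak{S}_{g'}$. Block decomposition $\tau=\begin{pmatrix}\tau'&\tau'''\\{}^t\tau'''&\tau''\end{pmatrix}$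 with $\tau'$ of size $g'\times g'$, similarly for $X,Y$. $P_{g'}\subset\mathrm{Sp}(2g,\mathbb{R})$ is the parabolic subgroup of matrices $\begin{pmatrix}A'&0&B'&*\\ *&u&*&*\\ C'&0&D'&*\\0&0&0&(u^t)^{-1}\end{pmatrix}$ with $\begin{pmatrix}A'&B'\\C'&D'\end{pmatrix}\in\mathrm{Sp}(2g',\mathbb{R})$, $u\in\mathrm{GL}(g'',\mathbb{R})$ (the normalizer of the flag $\langle e_{g'+1},\dots,e_g\rangle\subset\langle e_{g'+1},\dots,e_g\rangle^\perp$), and $\mathbb{P}_{g'}=\Gamma\cap P_{g'}$. The map $\pi_{g'}(\tau)=(\tau',\,Y''-{}^tY'''(Y')^{-1}Y''')$ from $\mathfrak{S}_g$ to $\mathfrak{S}_{g'}\times\mathrm{Sym}^+(g'',\mathbb{R})$ induces the projection $\mathbb{P}_{g'}\backslash\mathfrak{S}_g\to A_{g'}\times\mathcal{T}^{>0}_{g''}$, where $\mathcal{T}^{>0}_{g''}=\mathrm{GL}(g'',\mathbb{Z})\backslash\mathrm{Sym}^+(g'',\mathbb{R})$ (action $t\mapsto ata^t$) with metric $g''_{trWP}=\frac12\operatorname{tr}(t^{-1}dt\,t^{-1}dt)$. *)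

theory Defs
  imports Complex_Main "Jordan_Normal_Form.Matrix"
begin

text \<open>Real n x n matrices are JNF matrices; a point tau = X + iY of the Siegel space is
  the pair (X, Y) of real symmetric matrices, and a tangent vector V = V_X + i V_Y is the pair
  (V_X, V_Y).\<close>

definition mtr :: "real mat \<Rightarrow> real" where
  "mtr A = (\<Sum>i<dim_row A. A $$ (i, i))"

definition minv :: "real mat \<Rightarrow> real mat" where
  "minv A = (THE B. B \<in> carrier_mat (dim_row A) (dim_row A) \<and>
                    A * B = 1\<^sub>m (dim_row A) \<and> B * A = 1\<^sub>m (dim_row A))"

definition symmat :: "nat \<Rightarrow> real mat \<Rightarrow> bool" where
  "symmat n A \<longleftrightarrow> A \<in> carrier_mat n n \<and> transpose_mat A = A"

definition posdef :: "nat \<Rightarrow> real mat \<Rightarrow> bool" where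
  "posdef n A \<longleftrightarrow> symmat n A \<and>
     (\<forall>v \<in> carrier_vec n. v \<noteq> 0\<^sub>v n \<longrightarrow> scalar_prod v (A *\<^sub>v v) > 0)"

definition siegel :: "nat \<Rightarrow> real mat \<Rightarrow> real mat \<Rightarrow> bool" where
  "siegel n X Y \<longleftrightarrow> symmat n X \<and> posdef n Y"

text \<open>Weil--Petersson inner product at tau = X + iY of V = VX + i VY and W = WX + i WY
  (real part of the Hermitian form; the norm is the given one).\<close>
definition wp_inner :: "real mat \<Rightarrow> real mat \<times> real mat \<Rightarrow> real mat \<times> real mat \<Rightarrow> real" where
  "wp_inner Y V W = (let Yi = minv Y in
     (mtr (Yi * fst V * Yi * fst W) + mtr (Yi * snd V * Yi * snd W)) / 2)"

definition trwp_inner :: "real mat \<Rightarrow> real mat \<Rightarrow> real mat \<Rightarrow> real" where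
  "trwp_inner t A B = (let ti = minv t in mtr (ti * A * ti * B) / 2)"

definition proj :: "nat \<Rightarrow> real mat \<times> real mat \<Rightarrow> (real mat \<times> real mat) \<times> real mat" where
  "proj g' \<tau> = (let (X, Y) = \<tau>;
                   (X1, X2, X3, X4) = split_block X g' g';
                   (Y1, Y2, Y3, Y4) = split_block Y g' g'
               in ((X1, Y1), Y4 - transpose_mat Y2 * minv Y1 * Y2))"

definition mat_curve_deriv :: "(real \<Rightarrow> real mat) \<Rightarrow> real mat \<Rightarrow> bool" where
  "mat_curve_deriv c D \<longleftrightarrow>
     dim_row (c 0) = dim_row D \<and> dim_col (c 0) = dim_col D \<and>
     (\<forall>i < dim_row D. \<forall>j < dim_col D.
        ((\<lambda>t. c t $$ (i, j)) has_real_derivative D $$ (i, j)) (at 0))"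

definition dproj :: "nat \<Rightarrow> real mat \<times> real mat \<Rightarrow> real mat \<times> real mat
                     \<Rightarrow> (real mat \<times> real mat) \<times> real mat \<Rightarrow> bool" where
  "dproj g' \<tau> V W \<longleftrightarrow>
     (let c = (\<lambda>s. proj g' (fst \<tau> + s \<cdot>\<^sub>m fst V, snd \<tau> + s \<cdot>\<^sub>m snd V)) in
       mat_curve_deriv (\<lambda>s. fst (fst (c s))) (fst (fst W)) \<and>
       mat_curve_deriv (\<lambda>s. snd (fst (c s))) (snd (fst W)) \<and>
       mat_curve_deriv (\<lambda>s. snd (c s)) (snd W))"

definition target_sqnorm :: "(real mat \<times> real mat) \<times> real mat \<Rightarrow>
                              (real mat \<times> real mat) \<times> real mat \<Rightarrow> real" where
  "target_sqnorm p W = wp_inner (snd (fst p)) (fst W) (fst W) + trwp_inner (snd p) (snd W) (snd W)"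

end

theory Submission
  imports Defs "Jordan_Normal_Form.Determinant"
begin

lemma minv_eq:
  assumes A: "A \<in> carrier_mat n n" and B: "B \<in> carrier_mat n n" and AB: "A * B = 1\<^sub>m n"
  shows "minv A = B"
proof -
  have BA: "B * A = 1\<^sub>m n" using mat_mult_left_right_inverse[OF A B AB] .
  have dr: "dim_row A = n" using A by auto
  show ?thesis unfolding minv_def dr
  proof (rule the_equality)
    show "B \<in> carrier_mat n n \<and> A * B = 1\<^sub>m n \<and> B * A = 1\<^sub>m n" using B AB BA by auto
  next
    fix C assume C: "C \<in> carrier_mat n n \<and> A * C = 1\<^sub>m n \<and> C * A = 1\<^sub>m n"
    have "C = C * (A * B)" using C AB right_mult_one_mat[of C n n] by auto
    also have "\<dots> = (C * A) * B" using C A B by (intro assoc_mult_mat[symmetric]) auto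
    also have "\<dots> = B" using C B by simp
    finally show "C = B" .
  qed
qed

lemma minv_adj:
  assumes A: "A \<in> carrier_mat n n" and d: "det A \<noteq> 0"
  shows "minv A = (1 / det A) \<cdot>\<^sub>m adj_mat A"
proof (rule minv_eq[OF A])
  show "(1 / det A) \<cdot>\<^sub>m adj_mat A \<in> carrier_mat n n" using adj_mat(1)[OF A] by simp
  have "A * ((1 / det A) \<cdot>\<^sub>m adj_mat A) = (1 / det A) \<cdot>\<^sub>m (A * adj_mat A)"
    using A adj_mat(1)[OF A] by (simp add: mult_smult_distrib)
  also have "\<dots> = 1\<^sub>m n" using adj_mat(2)[OF A] d by (auto simp: smult_smult_assoc)
  finally show "A * ((1 / det A) \<cdot>\<^sub>m adj_mat A) = 1\<^sub>m n" .
qed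

lemma minv_props:
  assumes A: "A \<in> carrier_mat n n" and d: "det A \<noteq> 0"
  shows "minv A \<in> carrier_mat n n" "A * minv A = 1\<^sub>m n" "minv A * A = 1\<^sub>m n"
proof -
  have e: "minv A = (1 / det A) \<cdot>\<^sub>m adj_mat A" by (rule minv_adj[OF A d])
  show c: "minv A \<in> carrier_mat n n" unfolding e using adj_mat(1)[OF A] by simp
  have "A * ((1 / det A) \<cdot>\<^sub>m adj_mat A) = (1 / det A) \<cdot>\<^sub>m (A * adj_mat A)"
    using A adj_mat(1)[OF A] by (simp add: mult_smult_distrib)
  also have "\<dots> = 1\<^sub>m n" using adj_mat(2)[OF A] d by (auto simp: smult_smult_assoc)
  finally show ab: "A * minv A = 1\<^sub>m n" unfolding e .
  show "minv A * A = 1\<^sub>m n" using mat_mult_left_right_inverse[OF A c ab] .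
qed

lemma minv_sym:
  assumes A: "A \<in> carrier_mat n n" and d: "det A \<noteq> 0" and s: "transpose_mat A = A"
  shows "transpose_mat (minv A) = minv A"
proof -
  note p = minv_props[OF A d]
  have "A * transpose_mat (minv A) = 1\<^sub>m n"
  proof -
    have "A * transpose_mat (minv A) = transpose_mat (minv A * transpose_mat A)"
      using A p(1) by (simp add: transpose_mult)
    also have "\<dots> = 1\<^sub>m n" using p(3) s by simp
    finally show ?thesis .
  qed
  from minv_eq[OF A _ this] p(1) show ?thesis by simp
qed

lemma sum_split_add: "(\<Sum>i<n+k. f i) = (\<Sum>i<n. f i) + (\<Sum>i<k. f (n+i::nat))"
  for f :: "nat \<Rightarrow> 'a::comm_monoid_add"
  by (induction k) (auto simp: add.assoc)

lemma mtr_mult: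
  assumes "A \<in> carrier_mat n p" "B \<in> carrier_mat p n"
  shows "mtr (A * B) = (\<Sum>i<n. \<Sum>j<p. A $$ (i,j) * B $$ (j,i))"
proof -
  have "row A i \<bullet> col B i = (\<Sum>j<p. A $$ (i,j) * B $$ (j,i))" if "i < n" for i
    using assms that unfolding scalar_prod_def by (auto intro!: sum.cong simp: atLeast0LessThan)
  then show ?thesis using assms unfolding mtr_def by (auto intro!: sum.cong)
qed

lemma mtr_comm:
  assumes "A \<in> carrier_mat n p" "B \<in> carrier_mat p n"
  shows "mtr (A * B) = mtr (B * A)"
  unfolding mtr_mult[OF assms] mtr_mult[OF assms(2,1)]
  by (subst sum.swap) (simp add: mult.commute)

lemma mtr_add:
  assumes "A \<in> carrier_mat n n" "B \<in> carrier_mat n n"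
  shows "mtr (A + B) = mtr A + mtr B"
  using assms unfolding mtr_def by (simp add: sum.distrib)

lemma mtr_four_block:
  assumes "A \<in> carrier_mat n n" "D \<in> carrier_mat k k"
  shows "mtr (four_block_mat A B C D) = mtr A + mtr D"
proof -
  have "mtr (four_block_mat A B C D) = (\<Sum>i<n+k. four_block_mat A B C D $$ (i,i))"
    using assms unfolding mtr_def by simp
  also have "\<dots> = (\<Sum>i<n. four_block_mat A B C D $$ (i,i)) + (\<Sum>i<k. four_block_mat A B C D $$ (n+i,n+i))"
    by (rule sum_split_add)
  also have "\<dots> = mtr A + mtr D" using assms unfolding mtr_def by simp
  finally show ?thesis .
qed

definition mhd :: "nat \<Rightarrow> nat \<Rightarrow> (real \<Rightarrow> real mat) \<Rightarrow> real mat \<Rightarrow> bool" where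
  "mhd r k c D \<longleftrightarrow> (\<forall>s. c s \<in> carrier_mat r k) \<and> D \<in> carrier_mat r k \<and>
     (\<forall>i<r. \<forall>j<k. ((\<lambda>s. c s $$ (i,j)) has_real_derivative D $$ (i,j)) (at 0))"

lemma mhd_const: "A \<in> carrier_mat r k \<Longrightarrow> mhd r k (\<lambda>s. A) (0\<^sub>m r k)"
  unfolding mhd_def by auto

lemma mhd_lin: "A \<in> carrier_mat r k \<Longrightarrow> V \<in> carrier_mat r k \<Longrightarrow> mhd r k (\<lambda>s. A + s \<cdot>\<^sub>m V) V"
  unfolding mhd_def by (auto intro!: derivative_eq_intros)

lemma mhd_add: "mhd r k c1 D1 \<Longrightarrow> mhd r k c2 D2 \<Longrightarrow> mhd r k (\<lambda>s. c1 s + c2 s) (D1 + D2)"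
  unfolding mhd_def carrier_mat_def by (auto intro!: derivative_eq_intros)

lemma mhd_diff: "mhd r k c1 D1 \<Longrightarrow> mhd r k c2 D2 \<Longrightarrow> mhd r k (\<lambda>s. c1 s - c2 s) (D1 - D2)"
  unfolding mhd_def carrier_mat_def by (auto intro!: derivative_eq_intros)

lemma mhd_transpose: "mhd r k c D \<Longrightarrow> mhd k r (\<lambda>s. transpose_mat (c s)) (transpose_mat D)"
  unfolding mhd_def carrier_mat_def by auto

lemma mhd_mult:
  assumes 1: "mhd r k c1 D1" and 2: "mhd k l c2 D2"
  shows "mhd r l (\<lambda>s. c1 s * c2 s) (D1 * c2 0 + c1 0 * D2)"
proof -
  have c1: "\<And>s. c1 s \<in> carrier_mat r k" "D1 \<in> carrier_mat r k" using 1 unfolding mhd_def by auto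
  have c2: "\<And>s. c2 s \<in> carrier_mat k l" "D2 \<in> carrier_mat k l" using 2 unfolding mhd_def by auto
  have e: "(c1 s * c2 s) $$ (i,j) = (\<Sum>q<k. c1 s $$ (i,q) * c2 s $$ (q,j))" if "i < r" "j < l" for s i j
  proof -
    have "dim_row (c1 s) = r" "dim_col (c1 s) = k" "dim_row (c2 s) = k" "dim_col (c2 s) = l"
      using c1 c2 by auto
    then show ?thesis using that by (auto intro!: sum.cong simp: atLeast0LessThan scalar_prod_def)
  qed
  have e2: "(D1 * c2 0 + c1 0 * D2) $$ (i,j) =
     (\<Sum>q<k. c1 0 $$ (i,q) * D2 $$ (q,j) + D1 $$ (i,q) * c2 0 $$ (q,j))" if "i < r" "j < l" for i j
  proof -
    have "dim_row (c1 0) = r" "dim_col (c1 0) = k" "dim_row (c2 0) = k" "dim_col (c2 0) = l"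
      "dim_row D1 = r" "dim_col D1 = k" "dim_row D2 = k" "dim_col D2 = l"
      using c1 c2 by auto
    then show ?thesis using that by (auto simp: atLeast0LessThan sum.distrib scalar_prod_def add.commute)
  qed
  show ?thesis unfolding mhd_def
  proof (intro conjI allI impI)
    fix i j assume ij: "i < r" "j < l"
    have "((\<lambda>s. \<Sum>q<k. c1 s $$ (i,q) * c2 s $$ (q,j)) has_real_derivative
       (\<Sum>q<k. c1 0 $$ (i,q) * D2 $$ (q,j) + D1 $$ (i,q) * c2 0 $$ (q,j))) (at 0)"
      using 1 2 ij unfolding mhd_def
      by (auto intro!: DERIV_sum DERIV_mult')
    then show "((\<lambda>s. (c1 s * c2 s) $$ (i, j)) has_real_derivative (D1 * c2 0 + c1 0 * D2) $$ (i, j)) (at 0)"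
      using e[OF ij] e2[OF ij] by simp
  qed (use c1 c2 in \<open>auto intro!: mult_carrier_mat add_carrier_mat\<close>)
qed

definition blk1 :: "nat \<Rightarrow> real mat \<Rightarrow> real mat" where "blk1 m A = fst (split_block A m m)"
definition blk2 :: "nat \<Rightarrow> real mat \<Rightarrow> real mat" where "blk2 m A = fst (snd (split_block A m m))"
definition blk3 :: "nat \<Rightarrow> real mat \<Rightarrow> real mat" where "blk3 m A = fst (snd (snd (split_block A m m)))"
definition blk4 :: "nat \<Rightarrow> real mat \<Rightarrow> real mat" where "blk4 m A = snd (snd (snd (split_block A m m)))"

lemma blk_simps:
  "blk1 m A = mat m m (\<lambda>ij. A $$ ij)"
  "blk2 m A = mat m (dim_col A - m) (\<lambda>(i,j). A $$ (i,j+m))"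
  "blk3 m A = mat (dim_row A - m) m (\<lambda>(i,j). A $$ (i+m,j))"
  "blk4 m A = mat (dim_row A - m) (dim_col A - m) (\<lambda>(i,j). A $$ (i+m,j+m))"
  unfolding blk1_def blk2_def blk3_def blk4_def split_block_def Let_def by auto

lemma blk_carrier:
  assumes "A \<in> carrier_mat (m+k) (m+k)"
  shows "blk1 m A \<in> carrier_mat m m" "blk2 m A \<in> carrier_mat m k"
    "blk3 m A \<in> carrier_mat k m" "blk4 m A \<in> carrier_mat k k"
  using assms unfolding blk_simps by auto

lemma blk_split:
  assumes "A \<in> carrier_mat (m+k) (m+k)"
  shows "A = four_block_mat (blk1 m A) (blk2 m A) (blk3 m A) (blk4 m A)"
  using split_block(5)[of A m m "blk1 m A" "blk2 m A" "blk3 m A" "blk4 m A" k k] assms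
  unfolding blk1_def blk2_def blk3_def blk4_def by auto

lemma blk_four:
  assumes "A \<in> carrier_mat m m" "B \<in> carrier_mat m k" "C \<in> carrier_mat k m" "D \<in> carrier_mat k k"
  shows "blk1 m (four_block_mat A B C D) = A" "blk2 m (four_block_mat A B C D) = B"
    "blk3 m (four_block_mat A B C D) = C" "blk4 m (four_block_mat A B C D) = D"
  using assms unfolding blk_simps by (auto intro!: eq_matI)

lemma mhd_blk:
  assumes "mhd (m+k) (m+k) c D"
  shows "mhd m m (\<lambda>s. blk1 m (c s)) (blk1 m D)" "mhd m k (\<lambda>s. blk2 m (c s)) (blk2 m D)"
    "mhd k m (\<lambda>s. blk3 m (c s)) (blk3 m D)" "mhd k k (\<lambda>s. blk4 m (c s)) (blk4 m D)"
  using assms unfolding mhd_def blk_simps carrier_mat_def by auto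

lemma differentiable_prod_real:
  fixes f :: "'i \<Rightarrow> real \<Rightarrow> real"
  shows "finite A \<Longrightarrow> (\<forall>a\<in>A. f a differentiable (at x)) \<Longrightarrow> (\<lambda>s. \<Prod>a\<in>A. f a s) differentiable (at x)"
proof (induction A rule: finite_induct)
  case empty then show ?case by simp
next
  case (insert a A)
  then show ?case by (simp add: prod.insert_remove differentiable_mult)
qed

lemma det_differentiable:
  fixes c :: "real \<Rightarrow> real mat"
  assumes c: "\<And>s. c s \<in> carrier_mat n n"
    and d: "\<And>i j. i < n \<Longrightarrow> j < n \<Longrightarrow> (\<lambda>s. c s $$ (i,j)) differentiable (at (0::real))"
  shows "(\<lambda>s. det (c s)) differentiable (at 0)"
proof -
  have "(\<lambda>s. det (c s)) = (\<lambda>s. \<Sum>p\<in>{p. p permutes {0..<n}}. signof p * (\<Prod>i=0..<n. c s $$ (i, p i)))"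
    using det_def'[OF c] by auto
  moreover have "(\<lambda>s. \<Sum>p\<in>{p. p permutes {0..<n}}. signof p * (\<Prod>i=0..<n. c s $$ (i, p i))) differentiable (at 0)"
  proof (rule differentiable_sum)
    show "finite {p. p permutes {0..<n}}" by (simp add: finite_permutations)
    show "\<forall>p\<in>{p. p permutes {0..<n}}. (\<lambda>s. signof p * (\<Prod>i = 0..<n. c s $$ (i, p i))) differentiable at 0"
    proof
      fix p assume "p \<in> {p. p permutes {0..<n}}"
      then have "p i < n" if "i < n" for i using permutes_in_image[of p "{0..<n}" i] that by auto
      then have "(\<lambda>s. \<Prod>i = 0..<n. c s $$ (i, p i)) differentiable at 0"
        using differentiable_prod_real[of "{0..<n}" "\<lambda>i s. c s $$ (i, p i)" 0] d by auto
      then show "(\<lambda>s. signof p * (\<Prod>i = 0..<n. c s $$ (i, p i))) differentiable at 0"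
        by (intro differentiable_mult) auto
    qed
  qed
  ultimately show ?thesis by simp
qed

lemma has_deriv_differentiable: "(f has_real_derivative D) (at x) \<Longrightarrow> f differentiable (at x)"
  using real_differentiable_def by blast

lemma mhd_inv:
  assumes h: "mhd n n c D" and d0: "det (c 0) \<noteq> 0"
  shows "mhd n n (\<lambda>s. (1 / det (c s)) \<cdot>\<^sub>m adj_mat (c s)) (- (minv (c 0) * D * minv (c 0)))"
    "eventually (\<lambda>s. det (c s) \<noteq> 0) (nhds 0)"
proof -
  have c: "\<And>s. c s \<in> carrier_mat n n" and Dc: "D \<in> carrier_mat n n" using h unfolding mhd_def by auto
  have cd: "\<And>s. dim_row (c s) = n" "\<And>s. dim_col (c s) = n" using c by auto
  have dc: "(\<lambda>s. c s $$ (i,j)) differentiable (at 0)" if "i < n" "j < n" for i j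
    using h that unfolding mhd_def by (auto intro: has_deriv_differentiable)
  have ddet: "(\<lambda>s. det (c s)) differentiable (at 0)" by (rule det_differentiable[OF c dc])
  then have "isCont (\<lambda>s. det (c s)) 0"
    using real_differentiable_def DERIV_isCont by blast
  then have "((\<lambda>s. det (c s)) \<longlongrightarrow> det (c 0)) (nhds 0)"
    unfolding isCont_def using tendsto_at_iff_tendsto_nhds by blast
  then show ev: "eventually (\<lambda>s. det (c s) \<noteq> 0) (nhds 0)"
    using tendsto_imp_eventually_ne d0 by blast
  define N where "N = (\<lambda>s. (1 / det (c s)) \<cdot>\<^sub>m adj_mat (c s))"
  have Nc: "\<And>s. N s \<in> carrier_mat n n" unfolding N_def using adj_mat(1)[OF c] by simp
  have dN: "(\<lambda>s. N s $$ (i,j)) differentiable (at 0)" if ij: "i < n" "j < n" for i j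
  proof -
    have e: "(\<lambda>s. N s $$ (i,j)) = (\<lambda>s. (1 / det (c s)) * ((-1)^(j+i) * det (mat_delete (c s) j i)))"
      unfolding N_def cofactor_def[symmetric] using ij
      by (auto simp: adj_mat_def cd)
    have md: "(\<lambda>s. det (mat_delete (c s) j i)) differentiable (at 0)"
    proof (rule det_differentiable)
      show "\<And>s. mat_delete (c s) j i \<in> carrier_mat (n-1) (n-1)" using mat_delete_carrier[OF c] by blast
      fix i' j' assume "i' < n - 1" "j' < n - 1"
      then show "(\<lambda>s. mat_delete (c s) j i $$ (i', j')) differentiable at 0"
        unfolding mat_delete_def by (auto intro!: dc simp: cd)
    qed
    show ?thesis unfolding e using ddet md d0 by (auto intro!: differentiable_mult differentiable_divide)
  qed
  define DN where "DN = mat n n (\<lambda>(i,j). SOME d. ((\<lambda>s. N s $$ (i,j)) has_real_derivative d) (at 0))"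
  have hN: "mhd n n N DN" unfolding mhd_def
  proof (intro conjI allI impI)
    fix i j assume ij: "i < n" "j < n"
    obtain d where "((\<lambda>s. N s $$ (i,j)) has_real_derivative d) (at 0)"
      using dN[OF ij] real_differentiableE by blast
    then show "((\<lambda>s. N s $$ (i, j)) has_real_derivative DN $$ (i, j)) (at 0)"
      unfolding DN_def using ij by (auto intro: someI)
  qed (auto simp: Nc DN_def)
  have N0: "N 0 = minv (c 0)" unfolding N_def using minv_adj[OF c d0] by simp
  have DNc: "DN \<in> carrier_mat n n" unfolding DN_def by simp
  note prod = mhd_mult[OF h hN]
  have E: "(D * N 0) $$ (i,j) + (c 0 * DN) $$ (i,j) = 0" if ij: "i < n" "j < n" for i j
  proof -
    have 1: "((\<lambda>s. (c s * N s) $$ (i,j)) has_real_derivative (D * N 0 + c 0 * DN) $$ (i,j)) (at 0)"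
      using prod ij unfolding mhd_def by auto
    have "eventually (\<lambda>s. (c s * N s) $$ (i,j) = (1\<^sub>m n :: real mat) $$ (i,j)) (nhds 0)"
      using ev
    proof (rule eventually_mono)
      fix s assume "det (c s) \<noteq> 0"
      then have "c s * N s = 1\<^sub>m n" unfolding N_def using minv_adj[OF c] minv_props(2)[OF c] by metis
      then show "(c s * N s) $$ (i,j) = (1\<^sub>m n :: real mat) $$ (i,j)" by simp
    qed
    then have "((\<lambda>s. (c s * N s) $$ (i,j)) has_real_derivative 0) (at 0)"
      using DERIV_cong_ev[of 0 0 _ "\<lambda>s. (1\<^sub>m n :: real mat) $$ (i,j)" 0 0] by simp
    with 1 have "(D * N 0 + c 0 * DN) $$ (i,j) = 0" using DERIV_unique by blast
    moreover have "(D * N 0 + c 0 * DN) $$ (i,j) = (D * N 0) $$ (i,j) + (c 0 * DN) $$ (i,j)"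
      by (rule index_add_mat(1)) (use ij Dc DNc c[of 0] in auto)
    ultimately show ?thesis by simp
  qed
  have "c 0 * DN = - (D * N 0)"
  proof (rule eq_matI)
    fix i j assume "i < dim_row (- (D * N 0))" "j < dim_col (- (D * N 0))"
    then have ij: "i < n" "j < n" using Dc Nc[of 0] by auto
    have "(- (D * N 0)) $$ (i,j) = - ((D * N 0) $$ (i,j))" using ij Dc Nc[of 0] by simp
    then show "(c 0 * DN) $$ (i, j) = (- (D * N 0)) $$ (i, j)" using E[OF ij] by linarith
  qed (use Dc DNc c[of 0] Nc[of 0] in auto)
  show "mhd n n N (- (minv (c 0) * D * minv (c 0)))"
  proof -
    have "DN = (N 0 * c 0) * DN" using minv_props(3)[OF c d0] N0 DNc by simp
    also have "\<dots> = N 0 * (c 0 * DN)" by (rule assoc_mult_mat) (use Nc[of 0] c[of 0] DNc in auto)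
    also have "\<dots> = N 0 * (- (D * N 0))" using \<open>c 0 * DN = - (D * N 0)\<close> by simp
    also have "\<dots> = - (N 0 * D * N 0)" using Nc[of 0] Dc by (simp add: assoc_mult_mat)
    finally show ?thesis using hN N0 by simp
  qed
qed

lemma proj_eq: "proj m (X, Y) = ((blk1 m X, blk1 m Y), blk4 m Y - transpose_mat (blk2 m Y) * minv (blk1 m Y) * blk2 m Y)"
  unfolding proj_def blk1_def blk2_def blk4_def
  by (cases "split_block X m m", cases "split_block Y m m") (auto simp: Let_def)

definition Tm :: "nat \<Rightarrow> real mat \<Rightarrow> real mat \<Rightarrow> real mat" where
  "Tm m Y U = blk4 m U - ((transpose_mat (blk2 m U) * minv (blk1 m Y) +
      transpose_mat (blk2 m Y) * (- (minv (blk1 m Y) * blk1 m U * minv (blk1 m Y)))) * blk2 m Y +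
      transpose_mat (blk2 m Y) * minv (blk1 m Y) * blk2 m U)"

lemma lin0: "A \<in> carrier_mat r k \<Longrightarrow> V \<in> carrier_mat r k \<Longrightarrow> A + 0 \<cdot>\<^sub>m V = (A :: real mat)"
  by (intro eq_matI) auto

lemma mcd_iff:
  assumes h: "mhd r k c D" and ev: "eventually (\<lambda>s. c' s = c s) (nhds 0)"
  shows "mat_curve_deriv c' W \<longleftrightarrow> W = D"
proof -
  have c0: "c' 0 = c 0" using eventually_nhds_x_imp_x[OF ev] .
  have cc: "c 0 \<in> carrier_mat r k" "D \<in> carrier_mat r k" using h unfolding mhd_def by auto
  have ent: "((\<lambda>s. c' s $$ (i,j)) has_real_derivative d) (at 0) \<longleftrightarrow>
             ((\<lambda>s. c s $$ (i,j)) has_real_derivative d) (at 0)" for i j d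
    by (rule DERIV_cong_ev) (use ev in \<open>auto elim: eventually_mono\<close>)
  have hd: "((\<lambda>s. c s $$ (i,j)) has_real_derivative D $$ (i,j)) (at 0)" if "i < r" "j < k" for i j
    using h that unfolding mhd_def by auto
  show ?thesis
  proof
    assume m: "mat_curve_deriv c' W"
    then have dims: "dim_row W = r" "dim_col W = k" using c0 cc unfolding mat_curve_deriv_def by auto
    show "W = D"
    proof (rule eq_matI)
      fix i j assume "i < dim_row D" "j < dim_col D"
      then have ij: "i < r" "j < k" using cc by auto
      have "((\<lambda>s. c s $$ (i,j)) has_real_derivative W $$ (i,j)) (at 0)"
        using m ij dims ent unfolding mat_curve_deriv_def by auto
      then show "W $$ (i,j) = D $$ (i,j)" using hd[OF ij] DERIV_unique by blast
    qed (use dims cc in auto)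
  next
    assume "W = D"
    then show "mat_curve_deriv c' W" using c0 cc hd ent unfolding mat_curve_deriv_def by auto
  qed
qed

lemma dproj_iff:
  assumes X: "X \<in> carrier_mat (m+k) (m+k)" and Y: "Y \<in> carrier_mat (m+k) (m+k)"
    and VX: "fst V \<in> carrier_mat (m+k) (m+k)" and VY: "snd V \<in> carrier_mat (m+k) (m+k)"
    and d: "det (blk1 m Y) \<noteq> 0"
  shows "dproj m (X,Y) V W \<longleftrightarrow> W = ((blk1 m (fst V), blk1 m (snd V)), Tm m Y (snd V))"
proof -
  define cX where "cX = (\<lambda>s. X + s \<cdot>\<^sub>m fst V)"
  define cY where "cY = (\<lambda>s. Y + s \<cdot>\<^sub>m snd V)"
  have hX: "mhd (m+k) (m+k) cX (fst V)" unfolding cX_def by (rule mhd_lin[OF X VX])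
  have hY: "mhd (m+k) (m+k) cY (snd V)" unfolding cY_def by (rule mhd_lin[OF Y VY])
  have cY0: "cY 0 = Y" unfolding cY_def using lin0[OF Y VY] .
  note bY = mhd_blk[OF hY]
  define N where "N = (\<lambda>s. (1 / det (blk1 m (cY s))) \<cdot>\<^sub>m adj_mat (blk1 m (cY s)))"
  have d0: "det (blk1 m (cY 0)) \<noteq> 0" using d cY0 by simp
  note inv = mhd_inv[OF bY(1) d0, folded N_def]
  have h3: "mhd k k (\<lambda>s. blk4 m (cY s) - transpose_mat (blk2 m (cY s)) * N s * blk2 m (cY s)) (Tm m Y (snd V))"
  proof -
    have "mhd k k (\<lambda>s. blk4 m (cY s) - transpose_mat (blk2 m (cY s)) * N s * blk2 m (cY s))
      (blk4 m (snd V) - ((transpose_mat (blk2 m (snd V)) * N 0 + transpose_mat (blk2 m (cY 0)) *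
         (- (minv (blk1 m (cY 0)) * blk1 m (snd V) * minv (blk1 m (cY 0))))) * blk2 m (cY 0) +
         transpose_mat (blk2 m (cY 0)) * N 0 * blk2 m (snd V)))"
      by (intro mhd_diff mhd_mult[where k=m] mhd_transpose bY inv(1))
    moreover have "N 0 = minv (blk1 m Y)" unfolding N_def cY0
      using minv_adj[OF blk_carrier(1)[OF Y] d] by simp
    ultimately show ?thesis unfolding Tm_def cY0 by simp
  qed
  have ev3: "eventually (\<lambda>s. snd (proj m (cX s, cY s)) =
      blk4 m (cY s) - transpose_mat (blk2 m (cY s)) * N s * blk2 m (cY s)) (nhds 0)"
    using inv(2)
  proof (rule eventually_mono)
    fix s assume "det (blk1 m (cY s)) \<noteq> 0"
    moreover have "cY s \<in> carrier_mat (m+k) (m+k)" using hY unfolding mhd_def by auto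
    ultimately have "minv (blk1 m (cY s)) = N s" unfolding N_def
      using minv_adj[OF blk_carrier(1)] by blast
    then show "snd (proj m (cX s, cY s)) =
      blk4 m (cY s) - transpose_mat (blk2 m (cY s)) * N s * blk2 m (cY s)"
      unfolding proj_eq by simp
  qed
  have f1: "mat_curve_deriv (\<lambda>s. fst (fst (proj m (cX s, cY s)))) (fst (fst W)) \<longleftrightarrow> fst (fst W) = blk1 m (fst V)"
    by (rule mcd_iff[OF mhd_blk(1)[OF hX]]) (auto simp: proj_eq)
  have f2: "mat_curve_deriv (\<lambda>s. snd (fst (proj m (cX s, cY s)))) (snd (fst W)) \<longleftrightarrow> snd (fst W) = blk1 m (snd V)"
    by (rule mcd_iff[OF bY(1)]) (auto simp: proj_eq)
  have f3: "mat_curve_deriv (\<lambda>s. snd (proj m (cX s, cY s))) (snd W) \<longleftrightarrow> snd W = Tm m Y (snd V)"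
    by (rule mcd_iff[OF h3 ev3])
  have "dproj m (X,Y) V W \<longleftrightarrow>
    fst (fst W) = blk1 m (fst V) \<and> snd (fst W) = blk1 m (snd V) \<and> snd W = Tm m Y (snd V)"
    using f1 f2 f3 unfolding dproj_def Let_def cX_def cY_def by simp
  also have "\<dots> \<longleftrightarrow> W = ((blk1 m (fst V), blk1 m (snd V)), Tm m Y (snd V))"
    by (cases W) auto
  finally show ?thesis .
qed

lemma fb_mult:
  assumes "A1 \<in> carrier_mat m m" "B1 \<in> carrier_mat m k" "C1 \<in> carrier_mat k m" "D1 \<in> carrier_mat k k"
    "A2 \<in> carrier_mat m m" "B2 \<in> carrier_mat m k" "C2 \<in> carrier_mat k m" "D2 \<in> carrier_mat k k"
  shows "four_block_mat A1 B1 C1 D1 * four_block_mat A2 B2 C2 D2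
    = four_block_mat (A1 * A2 + B1 * C2) (A1 * B2 + B1 * D2) (C1 * A2 + D1 * C2) (C1 * B2 + D1 * D2)"
  by (rule mult_four_block_mat[OF assms])

lemma uminus_zero_mat': "- (0\<^sub>m nr nc :: real mat) = 0\<^sub>m nr nc"
  by (intro eq_matI) auto

lemma add_uminus_r_mat: "(A :: real mat) \<in> carrier_mat nr nc \<Longrightarrow> A + - A = 0\<^sub>m nr nc"
  by (intro eq_matI) auto

lemma assoc': assumes "dim_col A = dim_row B" "dim_col B = dim_row C" shows "A * B * C = A * (B * C :: real mat)"
proof -
  have "A \<in> carrier_mat (dim_row A) (dim_col A)" "B \<in> carrier_mat (dim_col A) (dim_col B)"
    "C \<in> carrier_mat (dim_col B) (dim_col C)" using assms unfolding carrier_mat_def by simp_all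
  then show ?thesis by (rule assoc_mult_mat)
qed

lemma add_mult': assumes "dim_row A = dim_row B" "dim_col A = dim_col B" "dim_col A = dim_row C"
  shows "(A + B) * C = A * C + B * (C :: real mat)"
proof -
  have "A \<in> carrier_mat (dim_row A) (dim_col A)" "B \<in> carrier_mat (dim_row A) (dim_col A)"
    "C \<in> carrier_mat (dim_col A) (dim_col C)" using assms unfolding carrier_mat_def by simp_all
  then show ?thesis by (rule add_mult_distrib_mat)
qed

lemma minus_mult': assumes "dim_row A = dim_row B" "dim_col A = dim_col B" "dim_col A = dim_row C"
  shows "(A - B) * C = A * C - B * (C :: real mat)"
proof -
  have "A \<in> carrier_mat (dim_row A) (dim_col A)" "B \<in> carrier_mat (dim_row A) (dim_col A)"
    "C \<in> carrier_mat (dim_col A) (dim_col C)" using assms unfolding carrier_mat_def by simp_all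
  then show ?thesis by (rule minus_mult_distrib_mat)
qed

lemma mult_add': assumes "dim_row B = dim_row C" "dim_col B = dim_col C" "dim_col A = dim_row B"
  shows "A * (B + C) = A * B + A * (C :: real mat)"
proof -
  have "A \<in> carrier_mat (dim_row A) (dim_col A)" "B \<in> carrier_mat (dim_col A) (dim_col B)"
    "C \<in> carrier_mat (dim_col A) (dim_col B)" using assms unfolding carrier_mat_def by simp_all
  then show ?thesis by (rule mult_add_distrib_mat)
qed

lemma mult_minus': assumes "dim_row B = dim_row C" "dim_col B = dim_col C" "dim_col A = dim_row B"
  shows "A * (B - C) = A * B - A * (C :: real mat)"
proof -
  have "A \<in> carrier_mat (dim_row A) (dim_col A)" "B \<in> carrier_mat (dim_col A) (dim_col B)"
    "C \<in> carrier_mat (dim_col A) (dim_col B)" using assms unfolding carrier_mat_def by simp_all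
  then show ?thesis by (rule mult_minus_distrib_mat)
qed

lemma transpose_mult': assumes "dim_col A = dim_row B"
  shows "transpose_mat (A * B) = transpose_mat B * transpose_mat (A :: real mat)"
proof -
  have "A \<in> carrier_mat (dim_row A) (dim_col A)" "B \<in> carrier_mat (dim_col A) (dim_col B)"
    using assms unfolding carrier_mat_def by simp_all
  then show ?thesis by (rule transpose_mult)
qed

lemmas malg = assoc' add_mult' mult_add' minus_mult' mult_minus' transpose_mult'

locale blk_setup =
  fixes m k :: nat and Y :: "real mat"
  assumes Yc: "Y \<in> carrier_mat (m+k) (m+k)" and Ys: "transpose_mat Y = Y"
    and Yp: "\<And>v. v \<in> carrier_vec (m+k) \<Longrightarrow> v \<noteq> 0\<^sub>v (m+k) \<Longrightarrow> v \<bullet> (Y *\<^sub>v v) > 0"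
begin

definition "Y1 = blk1 m Y"
definition "Y2 = blk2 m Y"
definition "Y4 = blk4 m Y"
definition "N1 = minv Y1"
definition "H = N1 * Y2"
definition "t = Y4 - transpose_mat Y2 * N1 * Y2"
definition "Nt = minv t"
definition "L = four_block_mat (1\<^sub>m m) H (0\<^sub>m k m) (1\<^sub>m k)"
definition "Li = four_block_mat (1\<^sub>m m) (- H) (0\<^sub>m k m) (1\<^sub>m k)"
definition "Dm = four_block_mat Y1 (0\<^sub>m m k) (0\<^sub>m k m) t"
definition "Di = four_block_mat N1 (0\<^sub>m m k) (0\<^sub>m k m) Nt"

lemma Yc': "dim_row Y = m + k" "dim_col Y = m + k" using Yc by auto

lemma c1: "Y1 \<in> carrier_mat m m" "Y2 \<in> carrier_mat m k" "Y4 \<in> carrier_mat k k"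
  unfolding Y1_def Y2_def Y4_def using blk_carrier[OF Yc] by auto

lemma Y3: "blk3 m Y = transpose_mat Y2"
proof -
  have "Y $$ (i + m, j) = Y $$ (j, i + m)" if "i < k" "j < m" for i j
    using arg_cong[OF Ys, of "\<lambda>A. A $$ (j, i+m)"] that Yc by auto
  then show ?thesis unfolding Y2_def blk_simps using Yc by (auto intro!: eq_matI)
qed

lemma Ysplit: "Y = four_block_mat Y1 Y2 (transpose_mat Y2) Y4"
  using blk_split[OF Yc] unfolding Y1_def Y2_def Y4_def Y3 by simp

lemma Y1s: "transpose_mat Y1 = Y1" and Y4s: "transpose_mat Y4 = Y4"
proof -
  have e: "Y $$ (i, j) = Y $$ (j, i)" if "i < m + k" "j < m + k" for i j
    using arg_cong[OF Ys, of "\<lambda>A. A $$ (j, i)"] that Yc by auto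
  show "transpose_mat Y1 = Y1" unfolding Y1_def blk_simps by (auto intro!: eq_matI e)
  show "transpose_mat Y4 = Y4" unfolding Y4_def blk_simps using Yc' by (auto intro!: eq_matI e)
qed

lemma Y1p: "v \<in> carrier_vec m \<Longrightarrow> v \<noteq> 0\<^sub>v m \<Longrightarrow> v \<bullet> (Y1 *\<^sub>v v) > 0"
proof -
  assume v: "v \<in> carrier_vec m" "v \<noteq> 0\<^sub>v m"
  let ?x = "v @\<^sub>v 0\<^sub>v k"
  have x: "?x \<in> carrier_vec (m+k)" using v by simp
  have "?x \<noteq> 0\<^sub>v (m+k)"
  proof
    assume z: "?x = 0\<^sub>v (m+k)"
    have "v = 0\<^sub>v m"
    proof (rule eq_vecI)
      fix i assume "i < dim_vec (0\<^sub>v m :: real vec)"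
      then have i: "i < m" by simp
      have "?x $ i = v $ i" using i v by simp
      then show "v $ i = 0\<^sub>v m $ i" using z i by simp
    qed (use v in auto)
    then show False using v by simp
  qed
  then have "?x \<bullet> (Y *\<^sub>v ?x) > 0" using Yp x by blast
  also have "Y *\<^sub>v ?x = (Y1 *\<^sub>v v + Y2 *\<^sub>v 0\<^sub>v k) @\<^sub>v (transpose_mat Y2 *\<^sub>v v + Y4 *\<^sub>v 0\<^sub>v k)"
    by (subst Ysplit, rule four_block_mat_mult_vec) (use c1 v in auto)
  also have "?x \<bullet> \<dots> = v \<bullet> (Y1 *\<^sub>v v + Y2 *\<^sub>v 0\<^sub>v k) + 0\<^sub>v k \<bullet> (transpose_mat Y2 *\<^sub>v v + Y4 *\<^sub>v 0\<^sub>v k)"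
    by (rule scalar_prod_append[of v m "0\<^sub>v k" k]) (use c1 v in auto)
  also have "Y2 *\<^sub>v 0\<^sub>v k = 0\<^sub>v m" using c1 by (intro eq_vecI) auto
  finally show ?thesis using c1 v by simp
qed

lemma detY1: "det Y1 \<noteq> 0"
proof
  assume "det Y1 = 0"
  then obtain v where v: "v \<in> carrier_vec m" "v \<noteq> 0\<^sub>v m" "Y1 *\<^sub>v v = 0\<^sub>v m"
    using det_0_iff_vec_prod_zero[OF c1(1)] by blast
  then show False using Y1p[OF v(1,2)] v by simp
qed

lemma N1: "N1 \<in> carrier_mat m m" "Y1 * N1 = 1\<^sub>m m" "N1 * Y1 = 1\<^sub>m m" "transpose_mat N1 = N1"
  unfolding N1_def using minv_props[OF c1(1) detY1] minv_sym[OF c1(1) detY1 Y1s] by auto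

lemma Hc: "H \<in> carrier_mat m k" unfolding H_def using N1 c1 by simp

lemma Y1H: "Y1 * H = Y2"
  unfolding H_def using N1 c1 by (simp flip: assoc_mult_mat)

lemma HT: "transpose_mat H = transpose_mat Y2 * N1"
  unfolding H_def using N1 c1 by (simp add: transpose_mult)

lemma HTY1: "transpose_mat H * Y1 = transpose_mat Y2"
proof -
  have "transpose_mat H * Y1 = transpose_mat Y2 * (N1 * Y1)"
    unfolding HT by (rule assoc_mult_mat) (use N1 c1 in auto)
  then show ?thesis using N1 c1 by simp
qed

lemma Y2NY2c: "transpose_mat Y2 * N1 * Y2 \<in> carrier_mat k k" using N1 c1 by simp

lemma tc: "t \<in> carrier_mat k k" unfolding t_def by (rule minus_carrier_mat[OF Y2NY2c])

lemma ts: "transpose_mat t = t"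
proof -
  have a: "transpose_mat (transpose_mat Y2 * N1 * Y2) = transpose_mat Y2 * transpose_mat (transpose_mat Y2 * N1)"
    by (rule transpose_mult[of _ k m _ k]) (use N1 c1 in auto)
  have b: "transpose_mat (transpose_mat Y2 * N1) = transpose_mat N1 * Y2"
    using transpose_mult[of "transpose_mat Y2" k m N1 m] N1 c1 by simp
  have c: "transpose_mat Y2 * N1 * Y2 = transpose_mat Y2 * (N1 * Y2)"
    by (rule assoc_mult_mat) (use N1 c1 in auto)
  have "transpose_mat (transpose_mat Y2 * N1 * Y2) = transpose_mat Y2 * (N1 * Y2)"
    using a b N1(4) by simp
  then have "transpose_mat (transpose_mat Y2 * N1 * Y2) = transpose_mat Y2 * N1 * Y2"
    using c by simp
  then show ?thesis unfolding t_def using transpose_minus[OF c1(3) Y2NY2c] Y4s by simp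
qed

lemma Lc: "L \<in> carrier_mat (m+k) (m+k)" "Li \<in> carrier_mat (m+k) (m+k)" "Dm \<in> carrier_mat (m+k) (m+k)"
  unfolding L_def Li_def Dm_def using Hc c1 tc by auto

lemma LT: "transpose_mat L = four_block_mat (1\<^sub>m m) (0\<^sub>m m k) (transpose_mat H) (1\<^sub>m k)"
  unfolding L_def by (subst transpose_four_block_mat) (use Hc in auto)

lemma LiT: "transpose_mat Li = four_block_mat (1\<^sub>m m) (0\<^sub>m m k) (- transpose_mat H) (1\<^sub>m k)"
  unfolding Li_def by (subst transpose_four_block_mat) (use Hc in \<open>auto simp: transpose_uminus\<close>)

lemmas cs = c1 N1(1) Hc tc carrier_matD[OF c1(1)] carrier_matD[OF c1(2)] carrier_matD[OF c1(3)]
  carrier_matD[OF N1(1)] carrier_matD[OF Hc] carrier_matD[OF tc]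

lemma LLi: "L * Li = 1\<^sub>m (m+k)"
  unfolding L_def Li_def using cs by (subst fb_mult) (auto simp: add_uminus_r_mat uminus_zero_mat')

lemma LiL: "Li * L = 1\<^sub>m (m+k)"
  unfolding L_def Li_def using cs by (subst fb_mult) (auto simp: add_uminus_r_mat uminus_zero_mat')

lemma Yfac: "Y = transpose_mat L * Dm * L"
proof -
  have 1: "transpose_mat L * Dm = four_block_mat Y1 (0\<^sub>m m k) (transpose_mat Y2) t"
    unfolding LT Dm_def using cs HTY1 by (subst fb_mult) auto
  have 2: "transpose_mat Y2 * H + t = Y4"
  proof -
    have "transpose_mat Y2 * H = transpose_mat Y2 * N1 * Y2" unfolding H_def
      by (rule assoc_mult_mat[symmetric]) (use cs in auto)
    then show ?thesis unfolding t_def using cs by (intro eq_matI) auto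
  qed
  have "transpose_mat L * Dm * L = four_block_mat Y1 (0\<^sub>m m k) (transpose_mat Y2) t * L"
    using 1 by simp
  also have "\<dots> = four_block_mat Y1 Y2 (transpose_mat Y2) (transpose_mat Y2 * H + t)"
    unfolding L_def using cs Y1H by (subst fb_mult) auto
  finally have "transpose_mat L * Dm * L = four_block_mat Y1 Y2 (transpose_mat Y2) (transpose_mat Y2 * H + t)" .
  then show ?thesis using 2 Ysplit by simp
qed

lemma tp: "w \<in> carrier_vec k \<Longrightarrow> w \<noteq> 0\<^sub>v k \<Longrightarrow> w \<bullet> (t *\<^sub>v w) > 0"
proof -
  assume w: "w \<in> carrier_vec k" "w \<noteq> 0\<^sub>v k"
  define z where "z = 0\<^sub>v m @\<^sub>v w"
  define x where "x = Li *\<^sub>v z"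
  have zc: "z \<in> carrier_vec (m+k)" unfolding z_def using w by simp
  have xc: "x \<in> carrier_vec (m+k)" unfolding x_def using Lc zc by simp
  have Lx: "L *\<^sub>v x = z"
  proof -
    have "L *\<^sub>v (Li *\<^sub>v z) = (L * Li) *\<^sub>v z" using Lc zc by simp
    then show ?thesis unfolding x_def LLi using zc by simp
  qed
  have "x \<noteq> 0\<^sub>v (m+k)"
  proof
    assume "x = 0\<^sub>v (m+k)"
    moreover have "L *\<^sub>v 0\<^sub>v (m+k) = 0\<^sub>v (m+k)" using Lc by (intro eq_vecI) (auto simp: scalar_prod_def)
    ultimately have "z = 0\<^sub>v (m+k)" using Lx by simp
    have "w = 0\<^sub>v k"
    proof (rule eq_vecI)
      fix i assume "i < dim_vec (0\<^sub>v k :: real vec)"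
      then have i: "i < k" by simp
      have "z $ (m + i) = w $ i" unfolding z_def using i w by simp
      then show "w $ i = 0\<^sub>v k $ i" using \<open>z = 0\<^sub>v (m+k)\<close> i by simp
    qed (use w in auto)
    then show False using w by simp
  qed
  then have pos: "x \<bullet> (Y *\<^sub>v x) > 0" using Yp xc by blast
  have "Y *\<^sub>v x = transpose_mat L *\<^sub>v (Dm *\<^sub>v (L *\<^sub>v x))"
  proof -
    have a: "transpose_mat L \<in> carrier_mat (m+k) (m+k)" "Dm * L \<in> carrier_mat (m+k) (m+k)"
      "transpose_mat L * Dm \<in> carrier_mat (m+k) (m+k)" using Lc by auto
    have "(transpose_mat L * Dm * L) *\<^sub>v x = (transpose_mat L * Dm) *\<^sub>v (L *\<^sub>v x)"
      by (rule assoc_mult_mat_vec) (use a Lc xc in auto)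
    also have "\<dots> = transpose_mat L *\<^sub>v (Dm *\<^sub>v (L *\<^sub>v x))"
      by (rule assoc_mult_mat_vec) (use a Lc xc in auto)
    finally show ?thesis using Yfac by simp
  qed
  then have "Y *\<^sub>v x = transpose_mat L *\<^sub>v (Dm *\<^sub>v z)" using Lx by simp
  then have "x \<bullet> (Y *\<^sub>v x) = z \<bullet> (Dm *\<^sub>v z)"
    using transpose_vec_mult_scalar[of L "m+k" "m+k" x "Dm *\<^sub>v z"] Lc xc zc Lx
    by (simp add: comm_scalar_prod[of x "m+k"] comm_scalar_prod[of "Dm *\<^sub>v z" "m+k"])
  also have "Dm *\<^sub>v z = (Y1 *\<^sub>v 0\<^sub>v m + 0\<^sub>m m k *\<^sub>v w) @\<^sub>v (0\<^sub>m k m *\<^sub>v 0\<^sub>v m + t *\<^sub>v w)"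
    unfolding Dm_def z_def by (rule four_block_mat_mult_vec) (use cs w in auto)
  also have "\<dots> = 0\<^sub>v m @\<^sub>v (t *\<^sub>v w)"
    using cs w by (intro arg_cong2[where f = append_vec] eq_vecI) (auto simp: scalar_prod_def)
  also have "z \<bullet> \<dots> = 0\<^sub>v m \<bullet> 0\<^sub>v m + w \<bullet> (t *\<^sub>v w)"
    unfolding z_def by (rule scalar_prod_append[of _ m _ k]) (use cs w in auto)
  finally show ?thesis using pos by simp
qed

lemma dett: "det t \<noteq> 0"
proof
  assume "det t = 0"
  then obtain v where v: "v \<in> carrier_vec k" "v \<noteq> 0\<^sub>v k" "t *\<^sub>v v = 0\<^sub>v k"
    using det_0_iff_vec_prod_zero[OF tc] by blast
  then show False using tp[OF v(1,2)] v by simp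
qed

lemma Nt: "Nt \<in> carrier_mat k k" "t * Nt = 1\<^sub>m k" "Nt * t = 1\<^sub>m k" "transpose_mat Nt = Nt"
  unfolding Nt_def using minv_props[OF tc dett] minv_sym[OF tc dett ts] by auto

lemma Dic: "Di \<in> carrier_mat (m+k) (m+k)" unfolding Di_def using N1 Nt by auto

lemma LTc: "transpose_mat L \<in> carrier_mat (m+k) (m+k)" "transpose_mat Li \<in> carrier_mat (m+k) (m+k)"
  using Lc by auto

lemma DmDi: "Dm * Di = 1\<^sub>m (m+k)"
  unfolding Dm_def Di_def using cs N1 Nt by (subst fb_mult) auto

lemma LTLiT: "transpose_mat L * transpose_mat Li = 1\<^sub>m (m+k)"
  using arg_cong[OF LiL, of transpose_mat] Lc by (simp add: transpose_mult)

lemma LiTLT: "transpose_mat Li * transpose_mat L = 1\<^sub>m (m+k)"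
  using arg_cong[OF LLi, of transpose_mat] Lc by (simp add: transpose_mult)

lemma canc:
  assumes X: "X \<in> carrier_mat (m+k) (m+k)"
  shows "L * (Li * X) = X" "Dm * (Di * X) = X" "transpose_mat L * (transpose_mat Li * X) = X"
    "transpose_mat Li * (transpose_mat L * X) = X"
proof -
  have "L * (Li * X) = (L * Li) * X" using Lc X by simp
  then show "L * (Li * X) = X" using LLi X by simp
  have "Dm * (Di * X) = (Dm * Di) * X" using Lc Dic X by simp
  then show "Dm * (Di * X) = X" using DmDi X by simp
  have "transpose_mat L * (transpose_mat Li * X) = (transpose_mat L * transpose_mat Li) * X" using LTc X by simp
  then show "transpose_mat L * (transpose_mat Li * X) = X" using LTLiT X by simp
  have "transpose_mat Li * (transpose_mat L * X) = (transpose_mat Li * transpose_mat L) * X" using LTc X by simp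
  then show "transpose_mat Li * (transpose_mat L * X) = X" using LiTLT X by simp
qed

lemma sqa: "A \<in> carrier_mat (m+k) (m+k) \<Longrightarrow> B \<in> carrier_mat (m+k) (m+k) \<Longrightarrow>
  C \<in> carrier_mat (m+k) (m+k) \<Longrightarrow> A * B * C = A * (B * C)"
  by (rule assoc_mult_mat)

lemma sqm: "A \<in> carrier_mat (m+k) (m+k) \<Longrightarrow> B \<in> carrier_mat (m+k) (m+k) \<Longrightarrow>
  A * B \<in> carrier_mat (m+k) (m+k)"
  by (rule mult_carrier_mat)

lemma minvY: "minv Y = Li * Di * transpose_mat Li"
proof (rule minv_eq[OF Yc])
  show "Li * Di * transpose_mat Li \<in> carrier_mat (m+k) (m+k)" using Lc Dic LTc by simp
  have "Y * (Li * Di * transpose_mat Li) = transpose_mat L * (Dm * (L * (Li * (Di * transpose_mat Li))))"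
  proof -
    have "Y * (Li * Di * transpose_mat Li) = (transpose_mat L * Dm * L) * (Li * Di * transpose_mat Li)"
      using Yfac by (rule arg_cong)
    then show ?thesis using Lc Dic LTc by (simp add: sqa sqm)
  qed
  also have "\<dots> = 1\<^sub>m (m+k)" using Lc Dic LTc by (simp add: canc LTLiT sqm)
  finally show "Y * (Li * Di * transpose_mat Li) = 1\<^sub>m (m+k)" .
qed


end

context blk_setup begin

lemma Tm_eq:
  assumes U: "U \<in> carrier_mat (m+k) (m+k)"
  shows "Tm m Y U = blk4 m U - transpose_mat (blk2 m U) * H - transpose_mat H * blk2 m U
     + transpose_mat H * blk1 m U * H"
proof -
  have d: "dim_row (blk1 m U) = m" "dim_col (blk1 m U) = m" "dim_row (blk2 m U) = m" "dim_col (blk2 m U) = k"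
    "dim_row (blk4 m U) = k" "dim_col (blk4 m U) = k" using blk_carrier[OF U] by auto
  have HT': "transpose_mat H = transpose_mat Y2 * N1" by (rule HT)
  have "Tm m Y U = blk4 m U - ((transpose_mat (blk2 m U) * N1 +
      transpose_mat Y2 * (- (N1 * blk1 m U * N1))) * Y2 + transpose_mat Y2 * N1 * blk2 m U)"
    unfolding Tm_def Y1_def[symmetric] Y2_def[symmetric] N1_def[symmetric] ..
  also have "\<dots> = blk4 m U - ((transpose_mat (blk2 m U) * (N1 * Y2) +
      - (transpose_mat Y2 * (N1 * (blk1 m U * (N1 * Y2))))) + transpose_mat Y2 * (N1 * blk2 m U))"
    using cs d by (simp add: malg)
  also have "\<dots> = blk4 m U - transpose_mat (blk2 m U) * H - transpose_mat H * blk2 m U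
     + transpose_mat H * blk1 m U * H"
    unfolding HT' H_def using cs d by (simp add: malg N1(4)) (intro eq_matI, auto)
  finally show ?thesis .
qed

lemma blk_sym:
  assumes U: "U \<in> carrier_mat (m+k) (m+k)" and s: "transpose_mat U = U"
  shows "blk3 m U = transpose_mat (blk2 m U)" "transpose_mat (blk1 m U) = blk1 m U"
    "transpose_mat (blk4 m U) = blk4 m U"
proof -
  have e: "U $$ (i, j) = U $$ (j, i)" if "i < m + k" "j < m + k" for i j
    using arg_cong[OF s, of "\<lambda>A. A $$ (j, i)"] that U by auto
  show "blk3 m U = transpose_mat (blk2 m U)" unfolding blk_simps using U by (auto intro!: eq_matI e)
  show "transpose_mat (blk1 m U) = blk1 m U" unfolding blk_simps by (auto intro!: eq_matI e)
  show "transpose_mat (blk4 m U) = blk4 m U" unfolding blk_simps using U by (auto intro!: eq_matI e)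
qed

definition "lift P Q = transpose_mat L * four_block_mat P (0\<^sub>m m k) (0\<^sub>m k m) Q * L"

lemma lift_blocks:
  assumes P: "P \<in> carrier_mat m m" and Q: "Q \<in> carrier_mat k k"
  shows "lift P Q = four_block_mat P (P * H) (transpose_mat H * P) (transpose_mat H * P * H + Q)"
proof -
  have 1: "transpose_mat L * four_block_mat P (0\<^sub>m m k) (0\<^sub>m k m) Q =
    four_block_mat P (0\<^sub>m m k) (transpose_mat H * P) Q"
    unfolding LT using cs P Q by (subst fb_mult) auto
  show ?thesis unfolding lift_def 1 unfolding L_def using cs P Q by (subst fb_mult) auto
qed

lemma lift_c: "P \<in> carrier_mat m m \<Longrightarrow> Q \<in> carrier_mat k k \<Longrightarrow> lift P Q \<in> carrier_mat (m+k) (m+k)"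
  unfolding lift_blocks using Hc by auto

lemma lift_b:
  assumes P: "P \<in> carrier_mat m m" and Q: "Q \<in> carrier_mat k k"
  shows "blk1 m (lift P Q) = P" "blk2 m (lift P Q) = P * H" "blk4 m (lift P Q) = transpose_mat H * P * H + Q"
  unfolding lift_blocks[OF P Q] using P Q Hc by (subst blk_four; auto)+

lemma lift_sym:
  assumes P: "P \<in> carrier_mat m m" and Q: "Q \<in> carrier_mat k k"
    and Ps: "transpose_mat P = P" and Qs: "transpose_mat Q = Q"
  shows "transpose_mat (lift P Q) = lift P Q"
proof -
  have G: "transpose_mat (four_block_mat P (0\<^sub>m m k) (0\<^sub>m k m) Q) = four_block_mat P (0\<^sub>m m k) (0\<^sub>m k m) Q"
    using P Q Ps Qs by (subst transpose_four_block_mat) auto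
  have d: "dim_row (four_block_mat P (0\<^sub>m m k) (0\<^sub>m k m) Q) = m + k"
    "dim_col (four_block_mat P (0\<^sub>m m k) (0\<^sub>m k m) Q) = m + k" using P Q by auto
  show ?thesis unfolding lift_def using Lc d G by (simp add: transpose_mult' assoc')
qed

lemma Tm_lift:
  assumes P: "P \<in> carrier_mat m m" and Q: "Q \<in> carrier_mat k k" and Ps: "transpose_mat P = P"
  shows "Tm m Y (lift P Q) = Q"
proof -
  have d: "dim_row P = m" "dim_col P = m" "dim_row Q = k" "dim_col Q = k" using P Q by auto
  show ?thesis unfolding Tm_eq[OF lift_c[OF P Q]] lift_b[OF P Q]
    using cs d Ps by (simp add: malg) (intro eq_matI, auto)
qed

lemma mtr_bd:
  assumes A: "A \<in> carrier_mat m m" and D: "D \<in> carrier_mat k k" and Z: "Z \<in> carrier_mat (m+k) (m+k)"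
  shows "mtr (four_block_mat A (0\<^sub>m m k) (0\<^sub>m k m) D * Z) = mtr (A * blk1 m Z) + mtr (D * blk4 m Z)"
proof -
  define Z1 Z2 Z3 Z4 where "Z1 = blk1 m Z" "Z2 = blk2 m Z" "Z3 = blk3 m Z" "Z4 = blk4 m Z"
  have Zs: "Z = four_block_mat Z1 Z2 Z3 Z4" unfolding Z1_Z2_Z3_Z4_def by (rule blk_split[OF Z])
  have c: "Z1 \<in> carrier_mat m m" "Z2 \<in> carrier_mat m k" "Z3 \<in> carrier_mat k m" "Z4 \<in> carrier_mat k k"
    unfolding Z1_Z2_Z3_Z4_def using blk_carrier[OF Z] by auto
  have "four_block_mat A (0\<^sub>m m k) (0\<^sub>m k m) D * Z =
     four_block_mat (A * Z1) (A * Z2) (D * Z3) (D * Z4)"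
    unfolding Zs using A D c by (subst fb_mult) auto
  moreover have "mtr (four_block_mat (A * Z1) (A * Z2) (D * Z3) (D * Z4)) = mtr (A * Z1) + mtr (D * Z4)"
    by (rule mtr_four_block) (use A D c in auto)
  ultimately show ?thesis unfolding Z1_Z2_Z3_Z4_def[symmetric] by simp
qed

lemma key:
  assumes U: "U \<in> carrier_mat (m+k) (m+k)" and Us: "transpose_mat U = U"
    and P: "P \<in> carrier_mat m m" and Q: "Q \<in> carrier_mat k k"
  shows "mtr (minv Y * lift P Q * minv Y * U) = mtr (N1 * P * N1 * blk1 m U) + mtr (Nt * Q * Nt * Tm m Y U)"
proof -
  define G where "G = four_block_mat P (0\<^sub>m m k) (0\<^sub>m k m) Q"
  have Gc: "G \<in> carrier_mat (m+k) (m+k)" unfolding G_def using P Q by auto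
  have s1: "minv Y * lift P Q * minv Y = Li * ((Di * G * Di) * transpose_mat Li)"
    unfolding minvY lift_def G_def[symmetric] using Lc LTc Dic Gc by (simp add: sqa sqm canc)
  define B where "B = Di * G * Di"
  have Bc: "B \<in> carrier_mat (m+k) (m+k)" unfolding B_def using Dic Gc by simp
  have s2: "mtr (minv Y * lift P Q * minv Y * U) = mtr (B * (transpose_mat Li * U * Li))"
  proof -
    have "mtr (minv Y * lift P Q * minv Y * U) = mtr (Li * ((B * transpose_mat Li) * U))"
      unfolding s1 B_def[symmetric] using Lc LTc Bc U by (simp add: sqa sqm)
    also have "\<dots> = mtr (((B * transpose_mat Li) * U) * Li)"
      by (rule mtr_comm) (use Lc LTc Bc U in auto)
    also have "\<dots> = mtr (B * (transpose_mat Li * U * Li))"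
      using Lc LTc Bc U by (simp add: sqa sqm)
    finally show ?thesis .
  qed
  have s3: "B = four_block_mat (N1 * P * N1) (0\<^sub>m m k) (0\<^sub>m k m) (Nt * Q * Nt)"
  proof -
    have "Di * G = four_block_mat (N1 * P) (0\<^sub>m m k) (0\<^sub>m k m) (Nt * Q)"
      unfolding Di_def G_def using N1 Nt P Q by (subst fb_mult) auto
    then show ?thesis unfolding B_def using N1 Nt P Q by (simp, subst Di_def, subst fb_mult) auto
  qed
  define U1 U2 U4 where "U1 = blk1 m U" "U2 = blk2 m U" "U4 = blk4 m U"
  have Uc: "U1 \<in> carrier_mat m m" "U2 \<in> carrier_mat m k" "U4 \<in> carrier_mat k k"
    unfolding U1_U2_U4_def using blk_carrier[OF U] by auto
  have Us': "U = four_block_mat U1 U2 (transpose_mat U2) U4"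
    unfolding U1_U2_U4_def blk_sym(1)[OF U Us, symmetric] by (rule blk_split[OF U])
  have s4a: "transpose_mat Li * U = four_block_mat U1 U2 (- transpose_mat H * U1 + transpose_mat U2) (- transpose_mat H * U2 + U4)"
    unfolding LiT Us' using Uc Hc by (subst fb_mult) auto
  have s4: "transpose_mat Li * U * Li = four_block_mat U1 (U1 * - H + U2)
      ((- transpose_mat H * U1 + transpose_mat U2) * 1\<^sub>m m)
      ((- transpose_mat H * U1 + transpose_mat U2) * - H + (- transpose_mat H * U2 + U4))"
  proof -
    have "transpose_mat Li * U * Li = four_block_mat U1 U2 (- transpose_mat H * U1 + transpose_mat U2)
      (- transpose_mat H * U2 + U4) * Li" using s4a by simp
    also have "\<dots> = four_block_mat U1 (U1 * - H + U2)
      ((- transpose_mat H * U1 + transpose_mat U2) * 1\<^sub>m m)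
      ((- transpose_mat H * U1 + transpose_mat U2) * - H + (- transpose_mat H * U2 + U4))"
      unfolding Li_def using Uc Hc by (subst fb_mult) auto
    finally show ?thesis .
  qed
  have cU: "transpose_mat Li * U * Li \<in> carrier_mat (m+k) (m+k)" using Lc LTc U by simp
  have b1: "blk1 m (transpose_mat Li * U * Li) = U1" unfolding s4 using Uc Hc by (subst blk_four) auto
  have b4: "blk4 m (transpose_mat Li * U * Li) = Tm m Y U"
  proof -
    have d: "dim_row U1 = m" "dim_col U1 = m" "dim_row U2 = m" "dim_col U2 = k"
      "dim_row U4 = k" "dim_col U4 = k" using Uc by auto
    have "blk4 m (transpose_mat Li * U * Li) =
       (- transpose_mat H * U1 + transpose_mat U2) * - H + (- transpose_mat H * U2 + U4)"
      unfolding s4 using Uc Hc by (subst blk_four) auto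
    also have "\<dots> = Tm m Y U" unfolding Tm_eq[OF U] U1_U2_U4_def[symmetric]
      using d cs by (simp add: malg) (intro eq_matI, auto)
    finally show ?thesis .
  qed
  show ?thesis unfolding s2 s3 using mtr_bd[OF _ _ cU, of "N1 * P * N1" "Nt * Q * Nt"] N1 Nt P Q b1 b4
    U1_U2_U4_def by simp
qed

end

definition qf :: "nat \<Rightarrow> (nat \<Rightarrow> nat \<Rightarrow> real) \<Rightarrow> (nat \<Rightarrow> real) \<Rightarrow> real" where
  "qf n P x = (\<Sum>i<n. \<Sum>j<n. x i * P i j * x j)"

definition tr2 :: "nat \<Rightarrow> (nat \<Rightarrow> nat \<Rightarrow> real) \<Rightarrow> (nat \<Rightarrow> nat \<Rightarrow> real) \<Rightarrow> real" where
  "tr2 n P M = (\<Sum>i<n. \<Sum>j<n. P i j * M j i)"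

lemma sum_delta2:
  fixes a b :: real and n r q :: nat
  assumes "r < n" "q < n"
  shows "(\<Sum>j<n. (a * (if j = r then 1 else 0) + b * (if j = q then 1 else 0)) * f j) = a * f r + b * f q"
proof -
  have "(\<Sum>j<n. (a * (if j = r then 1 else 0) + b * (if j = q then 1 else 0)) * f j) =
     (\<Sum>j<n. (if j = r then a * f j else 0)) + (\<Sum>j<n. (if j = q then b * f j else 0))"
  proof -
    have "(a * (if j = r then 1 else 0) + b * (if j = q then 1 else 0)) * f j =
      (if j = r then a * f j else 0) + (if j = q then b * f j else 0)" for j by (simp add: algebra_simps)
    then show ?thesis by (simp add: sum.distrib)
  qed
  also have "\<dots> = a * f r + b * f q" using assms by (simp add: sum.delta)
  finally show ?thesis .
qed

lemma qf_two:
  fixes a b :: real and n r q :: nat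
  assumes "r < n" "q < n"
  shows "qf n P (\<lambda>i. a * (if i = r then 1 else 0) + b * (if i = q then 1 else 0)) =
    a * (a * P r r + b * P r q) + b * (a * P q r + b * P q q)"
proof -
  let ?x = "\<lambda>i. a * (if i = r then 1 else 0) + b * (if i = q then 1 else 0)"
  have "qf n P ?x = (\<Sum>i<n. ?x i * (\<Sum>j<n. ?x j * P i j))"
    unfolding qf_def by (auto intro!: sum.cong simp: sum_distrib_left mult_ac)
  also have "\<dots> = (\<Sum>i<n. ?x i * (a * P i r + b * P i q))"
    using sum_delta2[OF assms, of a b] by (simp add: mult.commute)
  also have "\<dots> = a * (a * P r r + b * P r q) + b * (a * P q r + b * P q q)"
    using sum_delta2[OF assms, of a b "\<lambda>i. a * P i r + b * P i q"] by simp
  finally show ?thesis .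
qed

lemma sum_if_const: "(\<Sum>j\<in>A. if c then f j else 0) = (if c then sum f A else (0::real))"
  by (cases c) auto

lemma delta_mult: "(if i = r then 1 else 0) * (z::real) = (if i = r then z else 0)"
  by simp

lemma qf_shift:
  fixes n r :: nat
  assumes "r < n"
  shows "qf n P (\<lambda>i. x i - c * (if i = r then 1 else 0)) =
    qf n P x - c * (\<Sum>j<n. P r j * x j) - c * (\<Sum>i<n. x i * P i r) + c * c * P r r"
proof -
  let ?d = "\<lambda>i. (if i = r then 1 else 0) :: real"
  have e: "(x i - c * ?d i) * P i j * (x j - c * ?d j) =
     x i * P i j * x j - c * (?d i * (P i j * x j)) - c * (?d j * (x i * P i j)) + c * c * (?d i * (?d j * P i j))"
    for i j by (simp add: algebra_simps)
  have "qf n P (\<lambda>i. x i - c * ?d i) =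
     (\<Sum>i<n. \<Sum>j<n. x i * P i j * x j) - c * (\<Sum>i<n. \<Sum>j<n. ?d i * (P i j * x j))
     - c * (\<Sum>i<n. \<Sum>j<n. ?d j * (x i * P i j)) + c * c * (\<Sum>i<n. \<Sum>j<n. ?d i * (?d j * P i j))"
    unfolding qf_def e by (simp add: sum.distrib sum_subtractf sum_distrib_left)
  also have "(\<Sum>i<n. \<Sum>j<n. ?d i * (P i j * x j)) = (\<Sum>j<n. P r j * x j)"
    using assms by (simp add: delta_mult sum_if_const sum.delta)
  also have "(\<Sum>i<n. \<Sum>j<n. ?d j * (x i * P i j)) = (\<Sum>i<n. x i * P i r)"
    using assms by (simp add: delta_mult sum_if_const sum.delta)
  also have "(\<Sum>i<n. \<Sum>j<n. ?d i * (?d j * P i j)) = P r r"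
    using assms by (simp add: delta_mult sum_if_const sum.delta)
  finally show ?thesis unfolding qf_def by simp
qed

lemma tr2_psd_aux:
  fixes n r :: nat and M :: "nat \<Rightarrow> nat \<Rightarrow> real"
  assumes Mp: "\<And>x. qf n M x \<ge> 0" and rn: "r \<le> n"
  shows "\<forall>P. (\<forall>i<n. \<forall>j<n. P i j = P j i) \<longrightarrow> (\<forall>x. qf n P x \<ge> 0) \<longrightarrow>
    (\<forall>i<n. \<forall>j<n. (i < r \<or> j < r) \<longrightarrow> P i j = 0) \<longrightarrow> tr2 n P M \<ge> 0"
  using rn
proof (induction r rule: inc_induct)
  case base
  show ?case
  proof (intro allI impI)
    fix P :: "nat \<Rightarrow> nat \<Rightarrow> real"
    assume "\<forall>i<n. \<forall>j<n. (i < n \<or> j < n) \<longrightarrow> P i j = 0"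
    then show "tr2 n P M \<ge> 0" unfolding tr2_def by simp
  qed
next
  case (step r)
  show ?case
  proof (intro allI impI)
    fix P :: "nat \<Rightarrow> nat \<Rightarrow> real"
    assume sym: "\<forall>i<n. \<forall>j<n. P i j = P j i" and psd: "\<forall>x. qf n P x \<ge> 0"
      and z: "\<forall>i<n. \<forall>j<n. (i < r \<or> j < r) \<longrightarrow> P i j = 0"
    have rn: "r < n" using step by simp
    have "qf n P (\<lambda>i. 1 * (if i = r then 1 else 0) + 0 * (if i = r then 1 else 0)) = P r r"
      using qf_two[OF rn rn, of P 1 0] by simp
    then have p0: "P r r \<ge> 0" using psd[rule_format, of "\<lambda>i. 1 * (if i = r then 1 else 0) + 0 * (if i = r then 1 else 0)"] by simp
    show "tr2 n P M \<ge> 0"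
    proof (cases "P r r = 0")
      case True
      have row: "P r j = 0" if j: "j < n" for j
      proof (rule ccontr)
        assume nz: "P r j \<noteq> 0"
        then have jr: "j \<noteq> r" using True by auto
        define s where "s = - (P j j + 1) / (2 * P r j)"
        have "qf n P (\<lambda>i. s * (if i = r then 1 else 0) + 1 * (if i = j then 1 else 0)) =
          s * (s * P r r + 1 * P r j) + 1 * (s * P j r + 1 * P j j)" by (rule qf_two[OF rn j])
        also have "\<dots> = 2 * s * P r j + P j j" using True sym rn j by (simp add: algebra_simps)
        also have "\<dots> = -1" unfolding s_def using nz by (simp add: field_simps)
        finally show False using psd[rule_format, of "\<lambda>i. s * (if i = r then 1 else 0) + 1 * (if i = j then 1 else 0)"] by linarith
      qed
      have "\<forall>i<n. \<forall>j<n. (i < Suc r \<or> j < Suc r) \<longrightarrow> P i j = 0"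
      proof (intro allI impI)
        fix i j assume ij: "i < n" "j < n" "i < Suc r \<or> j < Suc r"
        then consider "i < r \<or> j < r" | "i = r" | "j = r" by linarith
        then show "P i j = 0"
        proof cases
          case 1 then show ?thesis using z ij by auto
        next
          case 2 then show ?thesis using row ij by auto
        next
          case 3 then show ?thesis using row ij sym by auto
        qed
      qed
      then show ?thesis using step.IH sym psd by blast
    next
      case False
      define p where "p = P r r"
      have pp: "p > 0" using p0 False unfolding p_def by simp
      define P' where "P' = (\<lambda>i j. P i j - P i r * P r j / p)"
      have sym': "\<forall>i<n. \<forall>j<n. P' i j = P' j i" unfolding P'_def using sym rn by (auto simp: mult.commute)
      have z': "\<forall>i<n. \<forall>j<n. (i < Suc r \<or> j < Suc r) \<longrightarrow> P' i j = 0"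
      proof (intro allI impI)
        fix i j assume ij: "i < n" "j < n" "i < Suc r \<or> j < Suc r"
        then consider "i < r" | "j < r" | "i = r" | "j = r" by linarith
        then show "P' i j = 0"
        proof cases
          case 1 then show ?thesis using z ij rn unfolding P'_def by auto
        next
          case 2 then show ?thesis using z ij rn unfolding P'_def by auto
        next
          case 3 then show ?thesis using pp unfolding P'_def p_def by auto
        next
          case 4 then show ?thesis using pp sym ij rn unfolding P'_def p_def by auto
        qed
      qed
      have psd': "\<forall>x. qf n P' x \<ge> 0"
      proof
        fix x :: "nat \<Rightarrow> real"
        define S where "S = (\<Sum>j<n. P r j * x j)"
        have S': "(\<Sum>i<n. x i * P i r) = S" unfolding S_def using sym rn by (auto intro!: sum.cong simp: mult.commute)
        have "qf n P' x = qf n P x - (\<Sum>i<n. \<Sum>j<n. (x i * P i r) * (P r j * x j)) / p"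
          unfolding qf_def P'_def by (simp add: algebra_simps sum_subtractf sum_divide_distrib)
        also have "(\<Sum>i<n. \<Sum>j<n. (x i * P i r) * (P r j * x j)) = (\<Sum>i<n. x i * P i r) * S"
          unfolding S_def by (simp add: sum_product)
        finally have 1: "qf n P' x = qf n P x - S * S / p" using S' by simp
        have "qf n P (\<lambda>i. x i - (S / p) * (if i = r then 1 else 0)) =
          qf n P x - (S / p) * S - (S / p) * S + (S / p) * (S / p) * p"
          using qf_shift[OF rn, of P x "S / p"] S' unfolding S_def p_def by simp
        also have "\<dots> = qf n P x - S * S / p" using pp by (simp add: field_simps)
        finally show "qf n P' x \<ge> 0" using 1 psd[rule_format, of "\<lambda>i. x i - (S / p) * (if i = r then 1 else 0)"] by linarith
      qed
      have ih: "tr2 n P' M \<ge> 0" using step.IH sym' psd' z' by blast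
      define u where "u = (\<lambda>i. P i r)"
      have "tr2 n P M = tr2 n P' M + (\<Sum>i<n. \<Sum>j<n. P i r * P r j * M j i) / p"
        unfolding tr2_def P'_def by (simp add: algebra_simps sum_subtractf sum_divide_distrib sum.distrib)
      also have "(\<Sum>i<n. \<Sum>j<n. P i r * P r j * M j i) = qf n M u"
      proof -
        have "(\<Sum>i<n. \<Sum>j<n. P i r * P r j * M j i) = (\<Sum>i<n. \<Sum>j<n. u j * M j i * u i)"
          unfolding u_def using sym rn by (auto intro!: sum.cong simp: mult_ac)
        also have "\<dots> = qf n M u" unfolding qf_def by (rule sum.swap)
        finally show ?thesis .
      qed
      finally show ?thesis using ih Mp[of u] pp by (simp add: divide_nonneg_pos)
    qed
  qed
qed

lemma tr2_psd:
  fixes n :: nat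
  assumes "\<And>x. qf n M x \<ge> 0" "\<forall>i<n. \<forall>j<n. P i j = P j i" "\<And>x. qf n P x \<ge> 0"
  shows "tr2 n P M \<ge> 0"
  using tr2_psd_aux[OF assms(1), of 0] assms(2,3) by auto

context blk_setup begin

lemma cong_blk:
  assumes U: "U \<in> carrier_mat (m+k) (m+k)" and Us: "transpose_mat U = U"
  shows "blk1 m (transpose_mat Li * U * Li) = blk1 m U" "blk4 m (transpose_mat Li * U * Li) = Tm m Y U"
proof -
  define U1 U2 U4 where "U1 = blk1 m U" "U2 = blk2 m U" "U4 = blk4 m U"
  have Uc: "U1 \<in> carrier_mat m m" "U2 \<in> carrier_mat m k" "U4 \<in> carrier_mat k k"
    unfolding U1_U2_U4_def using blk_carrier[OF U] by auto
  have Us': "U = four_block_mat U1 U2 (transpose_mat U2) U4"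
    unfolding U1_U2_U4_def blk_sym(1)[OF U Us, symmetric] by (rule blk_split[OF U])
  have s4a: "transpose_mat Li * U = four_block_mat U1 U2 (- transpose_mat H * U1 + transpose_mat U2) (- transpose_mat H * U2 + U4)"
    unfolding LiT Us' using Uc Hc by (subst fb_mult) auto
  have s4: "transpose_mat Li * U * Li = four_block_mat U1 (U1 * - H + U2)
      ((- transpose_mat H * U1 + transpose_mat U2) * 1\<^sub>m m)
      ((- transpose_mat H * U1 + transpose_mat U2) * - H + (- transpose_mat H * U2 + U4))"
  proof -
    have "transpose_mat Li * U * Li = four_block_mat U1 U2 (- transpose_mat H * U1 + transpose_mat U2)
      (- transpose_mat H * U2 + U4) * Li" using s4a by simp
    also have "\<dots> = four_block_mat U1 (U1 * - H + U2)
      ((- transpose_mat H * U1 + transpose_mat U2) * 1\<^sub>m m)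
      ((- transpose_mat H * U1 + transpose_mat U2) * - H + (- transpose_mat H * U2 + U4))"
      unfolding Li_def using Uc Hc by (subst fb_mult) auto
    finally show ?thesis .
  qed
  have cU: "transpose_mat Li * U * Li \<in> carrier_mat (m+k) (m+k)" using Lc LTc U by simp
  have b1: "blk1 m (transpose_mat Li * U * Li) = U1" unfolding s4 using Uc Hc by (subst blk_four) auto
  have b4: "blk4 m (transpose_mat Li * U * Li) = Tm m Y U"
  proof -
    have d: "dim_row U1 = m" "dim_col U1 = m" "dim_row U2 = m" "dim_col U2 = k"
      "dim_row U4 = k" "dim_col U4 = k" using Uc by auto
    have "blk4 m (transpose_mat Li * U * Li) =
       (- transpose_mat H * U1 + transpose_mat U2) * - H + (- transpose_mat H * U2 + U4)"
      unfolding s4 using Uc Hc by (subst blk_four) auto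
    also have "\<dots> = Tm m Y U" unfolding Tm_eq[OF U] U1_U2_U4_def[symmetric]
      using d cs by (simp add: malg) (intro eq_matI, auto)
    finally show ?thesis .
  qed
  show "blk1 m (transpose_mat Li * U * Li) = blk1 m U" using b1 U1_U2_U4_def by simp
  show "blk4 m (transpose_mat Li * U * Li) = Tm m Y U" by (rule b4)
qed

lemma Tm_sym:
  assumes U: "U \<in> carrier_mat (m+k) (m+k)" and Us: "transpose_mat U = U"
  shows "transpose_mat (Tm m Y U) = Tm m Y U"
proof -
  have c: "transpose_mat Li * U * Li \<in> carrier_mat (m+k) (m+k)" using Lc LTc U by simp
  have "transpose_mat (transpose_mat Li * U * Li) = transpose_mat Li * U * Li"
    using Lc LTc U Us by (simp add: transpose_mult' assoc')
  then show ?thesis using blk_sym(3)[OF c] cong_blk[OF U Us] by simp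
qed

lemma blk_add:
  assumes "U \<in> carrier_mat (m+k) (m+k)" "U' \<in> carrier_mat (m+k) (m+k)"
  shows "blk1 m (U + U') = blk1 m U + blk1 m U'" "blk4 m (U + U') = blk4 m U + blk4 m U'"
  using assms unfolding blk_simps by (auto intro!: eq_matI)

lemma Tm_add:
  assumes U: "U \<in> carrier_mat (m+k) (m+k)" "transpose_mat U = U"
    and U': "U' \<in> carrier_mat (m+k) (m+k)" "transpose_mat U' = U'"
  shows "Tm m Y (U + U') = Tm m Y U + Tm m Y U'"
proof -
  have s: "transpose_mat (U + U') = U + U'" using U U' by (simp add: transpose_add)
  have c: "U + U' \<in> carrier_mat (m+k) (m+k)" using U U' by simp
  have "transpose_mat Li * (U + U') * Li = transpose_mat Li * U * Li + transpose_mat Li * U' * Li"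
    using Lc LTc U U' by (simp add: malg)
  then have "blk4 m (transpose_mat Li * (U + U') * Li) = blk4 m (transpose_mat Li * U * Li) + blk4 m (transpose_mat Li * U' * Li)"
    using blk_add(2)[of "transpose_mat Li * U * Li" "transpose_mat Li * U' * Li"] Lc LTc U U' by simp
  then show ?thesis using cong_blk(2)[OF c s] cong_blk(2)[OF U] cong_blk(2)[OF U'] by simp
qed

end

lemma vq:
  assumes P: "P \<in> carrier_mat n n"
  shows "vec n x \<bullet> (P *\<^sub>v vec n x) = qf n (\<lambda>i j. P $$ (i,j)) x"
proof -
  have "vec n x \<bullet> (P *\<^sub>v vec n x) = (\<Sum>i<n. x i * (\<Sum>j<n. P $$ (i,j) * x j))"
    using P by (auto intro!: sum.cong simp: atLeast0LessThan scalar_prod_def)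
  also have "\<dots> = qf n (\<lambda>i j. P $$ (i,j)) x" unfolding qf_def
    by (auto intro!: sum.cong simp: sum_distrib_left mult_ac)
  finally show ?thesis .
qed

lemma mtr_psd_mat:
  assumes P: "P \<in> carrier_mat n n" and Ps: "transpose_mat P = P"
    and Pp: "\<And>v. v \<in> carrier_vec n \<Longrightarrow> v \<bullet> (P *\<^sub>v v) \<ge> 0"
    and M: "M \<in> carrier_mat n n" and Mp: "\<And>v. v \<in> carrier_vec n \<Longrightarrow> v \<bullet> (M *\<^sub>v v) \<ge> 0"
  shows "mtr (P * M) \<ge> 0"
proof -
  have "tr2 n (\<lambda>i j. P $$ (i,j)) (\<lambda>i j. M $$ (i,j)) \<ge> 0"
  proof (rule tr2_psd)
    show "qf n (\<lambda>i j. M $$ (i,j)) x \<ge> 0" for x using Mp[of "vec n x"] vq[OF M, of x] by simp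
    show "qf n (\<lambda>i j. P $$ (i,j)) x \<ge> 0" for x using Pp[of "vec n x"] vq[OF P, of x] by simp
    show "\<forall>i<n. \<forall>j<n. P $$ (i,j) = P $$ (j,i)"
      using Ps P by (metis carrier_matD(1,2) index_transpose_mat(1))
  qed
  then show ?thesis unfolding mtr_mult[OF P M] tr2_def .
qed

lemma posdef_det:
  fixes Y :: "real mat"
  assumes Y: "Y \<in> carrier_mat n n" and Yp: "\<And>v. v \<in> carrier_vec n \<Longrightarrow> v \<noteq> 0\<^sub>v n \<Longrightarrow> v \<bullet> (Y *\<^sub>v v) > 0"
  shows "det Y \<noteq> 0"
proof
  assume "det Y = 0"
  then obtain v where v: "v \<in> carrier_vec n" "v \<noteq> 0\<^sub>v n" "Y *\<^sub>v v = 0\<^sub>v n"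
    using det_0_iff_vec_prod_zero[OF Y] by blast
  then show False using Yp[OF v(1,2)] v by simp
qed

lemma wpi_nonneg:
  assumes Y: "Y \<in> carrier_mat n n" and Ys: "transpose_mat Y = Y"
    and Yp: "\<And>v. v \<in> carrier_vec n \<Longrightarrow> v \<noteq> 0\<^sub>v n \<Longrightarrow> v \<bullet> (Y *\<^sub>v v) > 0"
    and A: "A \<in> carrier_mat n n" and As: "transpose_mat A = A"
  shows "mtr (minv Y * A * minv Y * A) \<ge> 0"
proof -
  have d: "det Y \<noteq> 0" by (rule posdef_det[OF Y Yp])
  note Yi = minv_props[OF Y d] minv_sym[OF Y d Ys]
  have Ypsd: "v \<bullet> (Y *\<^sub>v v) \<ge> 0" if v: "v \<in> carrier_vec n" for v
  proof (cases "v = 0\<^sub>v n")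
    case True then show ?thesis using Y by simp
  next
    case False then show ?thesis using Yp[OF v] by simp
  qed
  have Yip: "v \<bullet> (minv Y *\<^sub>v v) \<ge> 0" if v: "v \<in> carrier_vec n" for v
  proof -
    define w where "w = minv Y *\<^sub>v v"
    have wc: "w \<in> carrier_vec n" unfolding w_def using Yi v by simp
    have "Y *\<^sub>v w = (Y * minv Y) *\<^sub>v v" unfolding w_def
      by (rule assoc_mult_mat_vec[symmetric]) (use Y Yi v in auto)
    then have Yw: "Y *\<^sub>v w = v" using Yi v by simp
    have "v \<bullet> w = (transpose_mat Y *\<^sub>v w) \<bullet> w" using Yw Ys by simp
    also have "\<dots> = w \<bullet> (Y *\<^sub>v w)" by (rule transpose_vec_mult_scalar[OF Y wc wc])
    finally show ?thesis unfolding w_def[symmetric] using Ypsd[OF wc] by simp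
  qed
  have Mp: "v \<bullet> ((A * minv Y * A) *\<^sub>v v) \<ge> 0" if v: "v \<in> carrier_vec n" for v
  proof -
    have "(A * minv Y * A) *\<^sub>v v = (A * minv Y) *\<^sub>v (A *\<^sub>v v)"
      by (rule assoc_mult_mat_vec) (use A Yi v in auto)
    also have "\<dots> = A *\<^sub>v (minv Y *\<^sub>v (A *\<^sub>v v))"
      by (rule assoc_mult_mat_vec) (use A Yi v in auto)
    finally have "(A * minv Y * A) *\<^sub>v v = A *\<^sub>v (minv Y *\<^sub>v (A *\<^sub>v v))" .
    moreover have "v \<bullet> (A *\<^sub>v (minv Y *\<^sub>v (A *\<^sub>v v))) = (A *\<^sub>v v) \<bullet> (minv Y *\<^sub>v (A *\<^sub>v v))"
      using transpose_vec_mult_scalar[OF A, of "minv Y *\<^sub>v (A *\<^sub>v v)" v] A As Yi v by simp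
    ultimately show ?thesis using Yip[of "A *\<^sub>v v"] A v by simp
  qed
  have "mtr (minv Y * (A * minv Y * A)) \<ge> 0"
    by (rule mtr_psd_mat[OF Yi(1) Yi(4) Yip _ Mp]) (use A Yi in auto)
  moreover have "minv Y * A * minv Y * A = minv Y * (A * minv Y * A)"
    using carrier_matD[OF A] carrier_matD[OF Yi(1)] by (simp add: assoc')
  ultimately show ?thesis by simp
qed

definition wpi :: "real mat \<Rightarrow> real mat \<Rightarrow> real mat \<Rightarrow> real" where
  "wpi M A B = mtr (M * A * M * B)"

lemma wp_inner_eq: "wp_inner Y V W = (wpi (minv Y) (fst V) (fst W) + wpi (minv Y) (snd V) (snd W)) / 2"
  unfolding wp_inner_def wpi_def Let_def ..

lemma mtr_add': "A \<in> carrier_mat n n \<Longrightarrow> B \<in> carrier_mat n n \<Longrightarrow> mtr (A + B) = mtr A + mtr B"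
  by (rule mtr_add)

lemma wpi_add1:
  assumes "M \<in> carrier_mat n n" "A \<in> carrier_mat n n" "B \<in> carrier_mat n n" "C \<in> carrier_mat n n"
  shows "wpi M (A + B) C = wpi M A C + wpi M B C"
proof -
  have e: "M * (A + B) * M * C = M * A * M * C + M * B * M * C" using assms by (simp add: malg)
  have c1: "M * A * M * C \<in> carrier_mat n n" "M * B * M * C \<in> carrier_mat n n"
    using assms by (auto intro!: mult_carrier_mat[of _ n n _ n])
  show ?thesis unfolding wpi_def e by (rule mtr_add[OF c1])
qed

lemma wpi_comm:
  assumes "M \<in> carrier_mat n n" "A \<in> carrier_mat n n" "B \<in> carrier_mat n n"
  shows "wpi M A B = wpi M B A"
proof -
  have e1: "M * A * M * B = (M * A) * (M * B)" by (rule assoc_mult_mat[of "M*A" n n M n B n]) (use assms in auto)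
  have e2: "M * B * M * A = (M * B) * (M * A)" by (rule assoc_mult_mat[of "M*B" n n M n A n]) (use assms in auto)
  show ?thesis unfolding wpi_def e1 e2 by (rule mtr_comm[of "M * A" n n "M * B"]) (use assms in auto)
qed

lemma wpi_add2:
  assumes "M \<in> carrier_mat n n" "A \<in> carrier_mat n n" "B \<in> carrier_mat n n" "C \<in> carrier_mat n n"
  shows "wpi M C (A + B) = wpi M C A + wpi M C B"
  using wpi_add1[OF assms] wpi_comm assms by (metis add_carrier_mat)

lemma cancel_add_mat:
  fixes A B :: "real mat"
  assumes "A \<in> carrier_mat r c" "B \<in> carrier_mat r c" "A = A + B"
  shows "B = 0\<^sub>m r c"
proof (rule eq_matI)
  fix i j assume ij: "i < dim_row (0\<^sub>m r c :: real mat)" "j < dim_col (0\<^sub>m r c :: real mat)"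
  have "A $$ (i,j) = (A + B) $$ (i,j)" using assms(3) by simp
  then have "A $$ (i,j) = A $$ (i,j) + B $$ (i,j)" using ij assms(1,2) by simp
  then show "B $$ (i,j) = 0\<^sub>m r c $$ (i,j)" using ij by simp
qed (use assms in auto)

context blk_setup begin

lemma mtr_zero_r: "Z \<in> carrier_mat r r \<Longrightarrow> mtr (Z * 0\<^sub>m r r) = 0"
  unfolding mtr_def by simp

lemma core:
  assumes VX: "VX \<in> carrier_mat (m+k) (m+k)" "transpose_mat VX = VX"
    and VY: "VY \<in> carrier_mat (m+k) (m+k)" "transpose_mat VY = VY"
  defines "A \<equiv> blk1 m VX" and "B \<equiv> blk1 m VY" and "T \<equiv> Tm m Y VY"
  defines "KX \<equiv> VX - lift A (0\<^sub>m k k)" and "KY \<equiv> VY - lift B T"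
  shows "wp_inner Y (VX, VY) (VX, VY) = target_sqnorm (proj m (X, Y)) ((A, B), T) + wp_inner Y (KX, KY) (KX, KY)"
    "wp_inner Y (VX, VY) (KX, KY) = wp_inner Y (KX, KY) (KX, KY)"
    "KX \<in> carrier_mat (m+k) (m+k)" "transpose_mat KX = KX"
    "KY \<in> carrier_mat (m+k) (m+k)" "transpose_mat KY = KY"
    "blk1 m KX = 0\<^sub>m m m" "blk1 m KY = 0\<^sub>m m m" "Tm m Y KY = 0\<^sub>m k k"
    "wp_inner Y (KX, KY) (KX, KY) \<ge> 0"
proof -
  have Ac: "A \<in> carrier_mat m m" "B \<in> carrier_mat m m" unfolding A_def B_def using blk_carrier VX VY by auto
  have As: "transpose_mat A = A" "transpose_mat B = B" unfolding A_def B_def using blk_sym VX VY by auto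
  have Tc: "T \<in> carrier_mat k k" unfolding T_def using Tm_eq[OF VY(1)] blk_carrier[OF VY(1)] Hc
    by (simp add: minus_carrier_mat)
  have Ts: "transpose_mat T = T" unfolding T_def by (rule Tm_sym[OF VY])
  have z: "(0\<^sub>m k k :: real mat) \<in> carrier_mat k k" "transpose_mat (0\<^sub>m k k :: real mat) = 0\<^sub>m k k" by auto
  define LX LY where "LX = lift A (0\<^sub>m k k)" "LY = lift B T"
  have Lc': "LX \<in> carrier_mat (m+k) (m+k)" "LY \<in> carrier_mat (m+k) (m+k)"
    unfolding LX_LY_def using lift_c Ac Tc by auto
  have Ls: "transpose_mat LX = LX" "transpose_mat LY = LY"
    unfolding LX_LY_def using lift_sym Ac As Tc Ts z by auto
  show KXc: "KX \<in> carrier_mat (m+k) (m+k)" and KYc: "KY \<in> carrier_mat (m+k) (m+k)"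
    unfolding KX_def KY_def LX_LY_def[symmetric] using VX VY Lc' by (auto intro: minus_carrier_mat)
  show KXs: "transpose_mat KX = KX" and KYs: "transpose_mat KY = KY"
    unfolding KX_def KY_def LX_LY_def[symmetric] using VX VY Lc' Ls by (auto simp: transpose_minus)
  have VXe: "VX = LX + KX" unfolding KX_def LX_LY_def[symmetric] using VX Lc' by (intro eq_matI) auto
  have VYe: "VY = LY + KY" unfolding KY_def LX_LY_def[symmetric] using VY Lc' by (intro eq_matI) auto
  have bLX: "blk1 m LX = A" "Tm m Y LX = 0\<^sub>m k k" unfolding LX_LY_def
    using lift_b(1) Tm_lift Ac As z by auto
  have bLY: "blk1 m LY = B" "Tm m Y LY = T" unfolding LX_LY_def
    using lift_b(1) Tm_lift Ac As Tc by auto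
  have "A = A + blk1 m KX" using arg_cong[OF VXe, of "blk1 m"] blk_add(1)[OF Lc'(1) KXc] bLX unfolding A_def by simp
  then show b1X: "blk1 m KX = 0\<^sub>m m m" using cancel_add_mat Ac blk_carrier(1)[OF KXc] by blast
  have "B = B + blk1 m KY" using arg_cong[OF VYe, of "blk1 m"] blk_add(1)[OF Lc'(2) KYc] bLY unfolding B_def by simp
  then show b1Y: "blk1 m KY = 0\<^sub>m m m" using cancel_add_mat Ac blk_carrier(1)[OF KYc] by blast
  have TKc: "Tm m Y KY \<in> carrier_mat k k" using Tm_eq[OF KYc] blk_carrier[OF KYc] Hc
    by (simp add: minus_carrier_mat)
  have "T = T + Tm m Y KY" using arg_cong[OF VYe, of "Tm m Y"] Tm_add[OF Lc'(2) Ls(2) KYc KYs] bLY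
    unfolding T_def by simp
  then show TKY: "Tm m Y KY = 0\<^sub>m k k" using cancel_add_mat Tc TKc by blast
  have Yi: "minv Y \<in> carrier_mat (m+k) (m+k)" unfolding minvY using Lc Dic LTc by simp
  note kX = key[OF KXc KXs Ac(1) z(1), folded LX_LY_def]
  note kY = key[OF KYc KYs Ac(2) Tc, folded LX_LY_def]
  note kXX = key[OF Lc'(1) Ls(1) Ac(1) z(1), folded LX_LY_def]
  note kYY = key[OF Lc'(2) Ls(2) Ac(2) Tc, folded LX_LY_def]
  have TKXc: "Tm m Y KX \<in> carrier_mat k k" using Tm_eq[OF KXc] blk_carrier[OF KXc] Hc
    by (simp add: minus_carrier_mat)
  have hX: "wpi (minv Y) LX KX = 0" unfolding wpi_def kX b1X using N1 Nt Ac TKXc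
    by (simp add: mtr_zero_r mtr_def)
  have hY: "wpi (minv Y) LY KY = 0" unfolding wpi_def kY b1Y TKY using N1 Nt Ac Tc
    by (simp add: mtr_zero_r mtr_def)
  have nX: "wpi (minv Y) LX LX = mtr (N1 * A * N1 * A)" unfolding wpi_def kXX bLX using N1 Nt Ac
    by (simp add: mtr_def)
  have nY: "wpi (minv Y) LY LY = mtr (N1 * B * N1 * B) + mtr (Nt * T * Nt * T)"
    unfolding wpi_def kYY bLY by simp
  have tgt: "target_sqnorm (proj m (X, Y)) ((A, B), T) =
      (mtr (N1 * A * N1 * A) + mtr (N1 * B * N1 * B)) / 2 + mtr (Nt * T * Nt * T) / 2"
    unfolding target_sqnorm_def proj_eq wp_inner_def trwp_inner_def Let_def fst_conv snd_conv
    unfolding Y1_def[symmetric] Y2_def[symmetric] Y4_def[symmetric] N1_def[symmetric] t_def[symmetric]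
      Nt_def[symmetric] by simp
  have eX: "wpi (minv Y) VX VX = wpi (minv Y) LX LX + 2 * wpi (minv Y) LX KX + wpi (minv Y) KX KX"
    unfolding VXe using wpi_add1 wpi_add2 wpi_comm Yi Lc' KXc by (simp add: wpi_add1 wpi_add2)
  have eY: "wpi (minv Y) VY VY = wpi (minv Y) LY LY + 2 * wpi (minv Y) LY KY + wpi (minv Y) KY KY"
    unfolding VYe using wpi_add1 wpi_add2 wpi_comm Yi Lc' KYc by (simp add: wpi_add1 wpi_add2)
  have fX: "wpi (minv Y) VX KX = wpi (minv Y) LX KX + wpi (minv Y) KX KX"
    unfolding VXe using Yi Lc' KXc by (simp add: wpi_add1)
  have fY: "wpi (minv Y) VY KY = wpi (minv Y) LY KY + wpi (minv Y) KY KY"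
    unfolding VYe using Yi Lc' KYc by (simp add: wpi_add1)
  show "wp_inner Y (VX, VY) (VX, VY) = target_sqnorm (proj m (X, Y)) ((A, B), T) + wp_inner Y (KX, KY) (KX, KY)"
    unfolding wp_inner_eq fst_conv snd_conv eX eY hX hY nX nY tgt by (simp add: field_simps)
  show "wp_inner Y (VX, VY) (KX, KY) = wp_inner Y (KX, KY) (KX, KY)"
    unfolding wp_inner_eq fst_conv snd_conv fX fY hX hY by simp
  show "wp_inner Y (KX, KY) (KX, KY) \<ge> 0"
    unfolding wp_inner_eq wpi_def fst_conv snd_conv
    using wpi_nonneg[OF Yc Ys Yp KXc KXs] wpi_nonneg[OF Yc Ys Yp KYc KYs] by simp
qed

end

theorem lemma3p11:
  fixes g g' :: nat
  assumes "1 \<le> g" and "g' < g"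
  shows "\<forall>X Y. siegel g X Y \<longrightarrow>
    (let g'' = g - g'; \<tau> = (X, Y); p = proj g' \<tau> in
      \<comment> \<open>differential defined on every tangent vector\<close>
      (\<forall>V. symmat g (fst V) \<and> symmat g (snd V) \<longrightarrow> (\<exists>W. dproj g' \<tau> V W)) \<and>
      \<comment> \<open>surjectivity of the differential\<close>
      (\<forall>W. symmat g' (fst (fst W)) \<and> symmat g' (snd (fst W)) \<and> symmat g'' (snd W) \<longrightarrow>
         (\<exists>V. symmat g (fst V) \<and> symmat g (snd V) \<and> dproj g' \<tau> V W)) \<and>
      \<comment> \<open>isometry on the horizontal space (orthogonal complement of the kernel)\<close>
      (\<forall>V W. symmat g (fst V) \<and> symmat g (snd V) \<and> dproj g' \<tau> V W \<and>
         (\<forall>K. symmat g (fst K) \<and> symmat g (snd K) \<and>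
              dproj g' \<tau> K ((0\<^sub>m g' g', 0\<^sub>m g' g'), 0\<^sub>m g'' g'') \<longrightarrow> wp_inner Y V K = 0)
         \<longrightarrow> target_sqnorm p W = wp_inner Y V V) \<and>
      \<comment> \<open>in particular: the differential does not increase lengths (1-Lipschitz)\<close>
      (\<forall>V W. symmat g (fst V) \<and> symmat g (snd V) \<and> dproj g' \<tau> V W
         \<longrightarrow> target_sqnorm p W \<le> wp_inner Y V V))"
proof (intro allI impI)
  fix X Y assume sg: "siegel g X Y"
  define k where "k = g - g'"
  have gk: "g = g' + k" unfolding k_def using assms by simp
  have sc: "symmat g A \<longleftrightarrow> A \<in> carrier_mat (g'+k) (g'+k) \<and> transpose_mat A = A" for A
    unfolding symmat_def gk ..
  have Xc: "X \<in> carrier_mat (g'+k) (g'+k)" using sg unfolding siegel_def sc by auto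
  have Yc: "Y \<in> carrier_mat (g'+k) (g'+k)" and Ys: "transpose_mat Y = Y"
    and Yp: "\<And>v. v \<in> carrier_vec (g'+k) \<Longrightarrow> v \<noteq> 0\<^sub>v (g'+k) \<Longrightarrow> v \<bullet> (Y *\<^sub>v v) > 0"
    using sg unfolding siegel_def posdef_def sc gk[symmetric] by (auto simp: gk)
  interpret B: blk_setup g' k Y using Yc Ys Yp by unfold_locales auto
  have dY1: "det (blk1 g' Y) \<noteq> 0" using B.detY1 unfolding B.Y1_def .
  have DI: "dproj g' (X, Y) V W \<longleftrightarrow> W = ((blk1 g' (fst V), blk1 g' (snd V)), Tm g' Y (snd V))"
    if "fst V \<in> carrier_mat (g'+k) (g'+k)" "snd V \<in> carrier_mat (g'+k) (g'+k)" for V W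
    by (rule dproj_iff[OF Xc Yc that dY1])
  have C1: "\<forall>V. symmat g (fst V) \<and> symmat g (snd V) \<longrightarrow> (\<exists>W. dproj g' (X, Y) V W)"
  proof (intro allI impI)
    fix V assume "symmat g (fst V) \<and> symmat g (snd V)"
    then show "\<exists>W. dproj g' (X, Y) V W" using DI unfolding sc by blast
  qed
  have C2: "\<forall>W. symmat g' (fst (fst W)) \<and> symmat g' (snd (fst W)) \<and> symmat (g - g') (snd W) \<longrightarrow>
         (\<exists>V. symmat g (fst V) \<and> symmat g (snd V) \<and> dproj g' (X, Y) V W)"
  proof (intro allI impI)
    fix W assume w: "symmat g' (fst (fst W)) \<and> symmat g' (snd (fst W)) \<and> symmat (g - g') (snd W)"
    define A BB T where "A = fst (fst W)" "BB = snd (fst W)" "T = snd W"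
    have c: "A \<in> carrier_mat g' g'" "transpose_mat A = A" "BB \<in> carrier_mat g' g'" "transpose_mat BB = BB"
      "T \<in> carrier_mat k k" "transpose_mat T = T"
      using w unfolding A_BB_T_def symmat_def k_def by auto
    have z: "(0\<^sub>m k k :: real mat) \<in> carrier_mat k k" "transpose_mat (0\<^sub>m k k :: real mat) = 0\<^sub>m k k" by auto
    define V where "V = (B.lift A (0\<^sub>m k k), B.lift BB T)"
    have Vc: "fst V \<in> carrier_mat (g'+k) (g'+k)" "snd V \<in> carrier_mat (g'+k) (g'+k)"
      unfolding V_def using B.lift_c c z by auto
    have Vs: "transpose_mat (fst V) = fst V" "transpose_mat (snd V) = snd V"
      unfolding V_def using B.lift_sym c z by auto
    have "dproj g' (X, Y) V W"
    proof -
      have "W = ((A, BB), T)" unfolding A_BB_T_def by simp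
      also have "\<dots> = ((blk1 g' (fst V), blk1 g' (snd V)), Tm g' Y (snd V))"
        unfolding V_def using B.lift_b(1) B.Tm_lift c z by auto
      finally show ?thesis using DI[OF Vc] by simp
    qed
    then show "\<exists>V. symmat g (fst V) \<and> symmat g (snd V) \<and> dproj g' (X, Y) V W"
      using Vc Vs unfolding sc by blast
  qed
  have CORE: "wp_inner Y V V = target_sqnorm (proj g' (X, Y)) W + wp_inner Y K K \<and>
      wp_inner Y V K = wp_inner Y K K \<and> wp_inner Y K K \<ge> 0 \<and>
      symmat g (fst K) \<and> symmat g (snd K) \<and> dproj g' (X, Y) K ((0\<^sub>m g' g', 0\<^sub>m g' g'), 0\<^sub>m (g - g') (g - g'))"
    if v: "symmat g (fst V)" "symmat g (snd V)" and d: "dproj g' (X, Y) V W"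
    and K: "K = (fst V - B.lift (blk1 g' (fst V)) (0\<^sub>m k k), snd V - B.lift (blk1 g' (snd V)) (Tm g' Y (snd V)))"
    for V W K
  proof -
    have vc: "fst V \<in> carrier_mat (g'+k) (g'+k)" "transpose_mat (fst V) = fst V"
      "snd V \<in> carrier_mat (g'+k) (g'+k)" "transpose_mat (snd V) = snd V" using v unfolding sc by auto
    have We: "W = ((blk1 g' (fst V), blk1 g' (snd V)), Tm g' Y (snd V))" using DI[OF vc(1,3)] d by simp
    have K1: "fst K = fst V - B.lift (blk1 g' (fst V)) (0\<^sub>m k k)"
      "snd K = snd V - B.lift (blk1 g' (snd V)) (Tm g' Y (snd V))" using K by simp_all
    have Ve: "(fst V, snd V) = V" by simp
    have Ke: "(fst K, snd K) = K" by simp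
    have e1: "wp_inner Y (fst V, snd V) (fst V, snd V) = target_sqnorm (proj g' (X, Y))
       ((blk1 g' (fst V), blk1 g' (snd V)), Tm g' Y (snd V)) + wp_inner Y (fst K, snd K) (fst K, snd K)"
      unfolding K1 by (rule B.core(1)[OF vc])
    have e2: "wp_inner Y (fst V, snd V) (fst K, snd K) = wp_inner Y (fst K, snd K) (fst K, snd K)"
      unfolding K1 by (rule B.core(2)[OF vc])
    have e3: "fst K \<in> carrier_mat (g'+k) (g'+k)" "transpose_mat (fst K) = fst K"
      "snd K \<in> carrier_mat (g'+k) (g'+k)" "transpose_mat (snd K) = snd K"
      "blk1 g' (fst K) = 0\<^sub>m g' g'" "blk1 g' (snd K) = 0\<^sub>m g' g'" "Tm g' Y (snd K) = 0\<^sub>m k k"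
      "wp_inner Y (fst K, snd K) (fst K, snd K) \<ge> 0"
      unfolding K1 by (rule B.core(3-10)[OF vc])+
    note co' = e1[unfolded Ve Ke We[symmetric]] e2[unfolded Ve Ke] e3[unfolded Ke]
    have "dproj g' (X, Y) K ((0\<^sub>m g' g', 0\<^sub>m g' g'), 0\<^sub>m (g - g') (g - g'))"
      using DI[OF e3(1) e3(3)] e3(5,6,7) unfolding k_def[symmetric] by simp
    then show ?thesis using co' e3 unfolding sc by auto
  qed
  have C3: "\<forall>V W. symmat g (fst V) \<and> symmat g (snd V) \<and> dproj g' (X, Y) V W \<and>
         (\<forall>K. symmat g (fst K) \<and> symmat g (snd K) \<and>
              dproj g' (X, Y) K ((0\<^sub>m g' g', 0\<^sub>m g' g'), 0\<^sub>m (g - g') (g - g')) \<longrightarrow> wp_inner Y V K = 0)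
         \<longrightarrow> target_sqnorm (proj g' (X, Y)) W = wp_inner Y V V"
  proof (intro allI impI)
    fix V W assume a: "symmat g (fst V) \<and> symmat g (snd V) \<and> dproj g' (X, Y) V W \<and>
         (\<forall>K. symmat g (fst K) \<and> symmat g (snd K) \<and>
              dproj g' (X, Y) K ((0\<^sub>m g' g', 0\<^sub>m g' g'), 0\<^sub>m (g - g') (g - g')) \<longrightarrow> wp_inner Y V K = 0)"
    define K where "K = (fst V - B.lift (blk1 g' (fst V)) (0\<^sub>m k k), snd V - B.lift (blk1 g' (snd V)) (Tm g' Y (snd V)))"
    note c = CORE[OF _ _ _ K_def] 
    have cc: "wp_inner Y V V = target_sqnorm (proj g' (X, Y)) W + wp_inner Y K K"
      "wp_inner Y V K = wp_inner Y K K"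
      "symmat g (fst K) \<and> symmat g (snd K) \<and> dproj g' (X, Y) K ((0\<^sub>m g' g', 0\<^sub>m g' g'), 0\<^sub>m (g - g') (g - g'))"
      using c a by blast+
    have "wp_inner Y V K = 0" using a cc(3) by blast
    then show "target_sqnorm (proj g' (X, Y)) W = wp_inner Y V V" using cc(1,2) by linarith
  qed
  have C4: "\<forall>V W. symmat g (fst V) \<and> symmat g (snd V) \<and> dproj g' (X, Y) V W
         \<longrightarrow> target_sqnorm (proj g' (X, Y)) W \<le> wp_inner Y V V"
  proof (intro allI impI)
    fix V W assume a: "symmat g (fst V) \<and> symmat g (snd V) \<and> dproj g' (X, Y) V W"
    define K where "K = (fst V - B.lift (blk1 g' (fst V)) (0\<^sub>m k k), snd V - B.lift (blk1 g' (snd V)) (Tm g' Y (snd V)))"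
    note c = CORE[OF _ _ _ K_def] 
    have cc: "wp_inner Y V V = target_sqnorm (proj g' (X, Y)) W + wp_inner Y K K"
      "wp_inner Y K K \<ge> 0"
      using c a by blast+
    then show "target_sqnorm (proj g' (X, Y)) W \<le> wp_inner Y V V" by linarith
  qed
  show "let g'' = g - g'; \<tau> = (X, Y); p = proj g' \<tau> in
      (\<forall>V. symmat g (fst V) \<and> symmat g (snd V) \<longrightarrow> (\<exists>W. dproj g' \<tau> V W)) \<and>
      (\<forall>W. symmat g' (fst (fst W)) \<and> symmat g' (snd (fst W)) \<and> symmat g'' (snd W) \<longrightarrow>
         (\<exists>V. symmat g (fst V) \<and> symmat g (snd V) \<and> dproj g' \<tau> V W)) \<and>
      (\<forall>V W. symmat g (fst V) \<and> symmat g (snd V) \<and> dproj g' \<tau> V W \<and>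
         (\<forall>K. symmat g (fst K) \<and> symmat g (snd K) \<and>
              dproj g' \<tau> K ((0\<^sub>m g' g', 0\<^sub>m g' g'), 0\<^sub>m g'' g'') \<longrightarrow> wp_inner Y V K = 0)
         \<longrightarrow> target_sqnorm p W = wp_inner Y V V) \<and>
      (\<forall>V W. symmat g (fst V) \<and> symmat g (snd V) \<and> dproj g' \<tau> V W
         \<longrightarrow> target_sqnorm p W \<le> wp_inner Y V V)"
    unfolding Let_def using C1 C2 C3 C4 by blast
qed

end
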